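(* Consider the sampling rule of F-TaS (described in the context), run indefinitely on the $K$-armed unit-variance Gaussian bandit with $\theta\in\Theta$. Let $\alpha>0$, $\varepsilon>0$, and for $T\ge1$ let $C_T(\varepsilon)=\bigcap_{t=\lceil T^{1/4}\rceil}^{T}\{\|\hat\theta(t)-\theta\|_\infty\le\varepsilon\}$. Then there exists a constant $B_\varepsilon>0$ depending on $\varepsilon$ such that for all $T\ge1$, $$\mathbb{P}_\theta\big(\overline{C_T(\varepsilon)}\big)\le\frac{1}{T^\alpha}+2B_\varepsilon KT\exp\left(-2\left\lfloor\frac{p_0^{1/4}T^{1/16}}{\sqrt{\ln(1+K'T^\alpha)}}\right\rfloor\varepsilon^2\right),$$ where for pre-specified rates $K'=2\max(K_0,K-K_0)$ and $p_0=\min\big((1-p_{\rm sum})/(2K_0),\ \min_{a:p_a>0}p_a\big)$, and for $\theta$-dependent rates $p_0=1/(2K)$ and $K'=K$.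
   Context: Bandit model: arms $[K]$, unknown $\theta\in\Theta:=\{\theta\in\mathbb{R}^K:\arg\max_a\theta_a\text{ unique}\}$, reward $r_t\sim\mathcal N(\theta_{a_t},1)$; $\hat\theta(t)$ the vector of empirical means after $t$ rounds. Fairness rates: pre-specified $p\in[0,1]^K$ with $p_{\rm sum}=\sum_ap_a\le1$, $K_0=|\{a:p_a=0\}|$ (in $p_0$, the term $(1-p_{\rm sum})/(2K_0)$ is read as $+\infty$ when $K_0=0$), or continuous $p:\mathbb{R}^K\to[0,1]^K$ with sum at most $1$. $\Sigma_p=\{w\in[0,1]^K:w\ge p,\sum_aw_a=1\}$; for a parameter $\lambda$ with unique best arm $a^\star_\lambda$ and gaps $\Delta_a(\lambda)$, $w^\star_p(\lambda)\in\arg\min_{w\in\Sigma_p}\max_{a\ne a^\star_\lambda}(w_a^{-1}+w_{a^\star_\lambda}^{-1})/\Delta_a(\lambda)^2$ (with $p=p(\lambda)$ in the $\theta$-dependent case). F-TaS sampling rule: $\epsilon_t=1/(2\sqrt t)$; pre-specified case: if $K_0=0$, $\pi_{c,a}=p_a+(1-p_{\rm sum})/K$; otherwise $\pi_{c,a}=p_a$ if $p_a>0$ and $(1-p_{\rm sum})/K_0$ if $p_a=0$; $\theta$-dependent case: $\pi_{c,a}=1/K$. At round $t$, $a_t\sim\pi(t)=(1-\epsilon_t)w^\star_p(\hat\theta)+\epsilon_t\pi_c$, $\hat\theta$ the current empirical means (fixed convention when undefined). *)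

theory Defs
  imports "HOL-Probability.Probability"
begin

(* Arms are the elements of a finite linearly ordered type 'k, so K = CARD('k).
   Parameter vectors, weights and rates are elements of real^'k. *)

definition unique_best :: "real^'k \<Rightarrow> bool" where
  "unique_best l \<longleftrightarrow> (\<exists>a. \<forall>b. b \<noteq> a \<longrightarrow> l$b < l$a)"

definition best_arm :: "real^'k \<Rightarrow> 'k" where
  "best_arm l = (THE a. \<forall>b. b \<noteq> a \<longrightarrow> l$b < l$a)"

definition gap :: "real^'k \<Rightarrow> 'k \<Rightarrow> real" where
  "gap l a = l$(best_arm l) - l$a"

definition Sigma_p :: "real^'k \<Rightarrow> (real^'k) set" where
  "Sigma_p p = {w. (\<forall>a. p$a \<le> w$a \<and> w$a \<le> 1) \<and> (\<Sum>a\<in>UNIV. w$a) = 1}"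

definition wobj :: "real^'k \<Rightarrow> real^'k \<Rightarrow> ereal" where
  "wobj l w = (SUP a\<in>{a. a \<noteq> best_arm l}.
      (if w$a > 0 \<and> w$(best_arm l) > 0
       then ereal ((1 / w$a + 1 / w$(best_arm l)) / (gap l a)\<^sup>2)
       else \<infinity>))"

definition is_wstar :: "real^'k \<Rightarrow> real^'k \<Rightarrow> real^'k \<Rightarrow> bool" where
  "is_wstar p l w \<longleftrightarrow> w \<in> Sigma_p p \<and> (\<forall>v\<in>Sigma_p p. wobj l w \<le> wobj l v)"

definition wstar_selection :: "(real^'k \<Rightarrow> real^'k) \<Rightarrow> (real^'k \<Rightarrow> real^'k) \<Rightarrow> bool" where
  "wstar_selection prule sel \<longleftrightarrow>
     (\<forall>l. sel l \<in> Sigma_p (prule l) \<and> (unique_best l \<longrightarrow> is_wstar (prule l) l (sel l)))"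

definition K0 :: "real^'k \<Rightarrow> nat" where
  "K0 p = card {a. p$a = 0}"

definition psum :: "real^'k \<Rightarrow> real" where
  "psum p = (\<Sum>a\<in>UNIV. p$a)"

definition pic_pre :: "real^'k \<Rightarrow> real^'k" where
  "pic_pre p = (if K0 p = 0 then (\<chi> a. p$a + (1 - psum p) / real CARD('k))
                else (\<chi> a. if p$a > 0 then p$a else (1 - psum p) / real (K0 p)))"

text \<open>p_0 = min((1-p_sum)/(2K_0), min_{a: p_a>0} p_a), a term being +infinity if its
  index set is empty (K_0 = 0, resp. no arm with p_a > 0).\<close>
definition p0_pre :: "real^'k \<Rightarrow> real" where
  "p0_pre p = (if K0 p = 0 then Min {p$a | a. p$a > 0}
               else if {a. p$a > 0} = {} then (1 - psum p) / (2 * real (K0 p))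
               else min ((1 - psum p) / (2 * real (K0 p))) (Min {p$a | a. p$a > 0}))"

definition Kprime_pre :: "real^'k \<Rightarrow> nat" where
  "Kprime_pre p = 2 * max (K0 p) (CARD('k) - K0 p)"

text \<open>The two fairness settings. prule maps a parameter lambda to the rate vector p(lambda).\<close>
definition fair_setting ::
  "(real^'k \<Rightarrow> real^'k) \<Rightarrow> real^'k \<Rightarrow> real \<Rightarrow> nat \<Rightarrow> bool" where
  "fair_setting prule pic p0 K' \<longleftrightarrow>
     (\<exists>p. (\<forall>a. 0 \<le> p$a \<and> p$a \<le> 1) \<and> psum p \<le> 1 \<and> prule = (\<lambda>_. p)
          \<and> pic = pic_pre p \<and> p0 = p0_pre p \<and> K' = Kprime_pre p)
   \<or> (continuous_on UNIV prule \<and> (\<forall>l a. 0 \<le> prule l $ a \<and> prule l $ a \<le> 1)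
          \<and> (\<forall>l. psum (prule l) \<le> 1)
          \<and> pic = (\<chi> a. 1 / real CARD('k)) \<and> p0 = 1 / (2 * real CARD('k)) \<and> K' = CARD('k))"

text \<open>Bandit environment in the reward-table model: X a n is the reward of the (n+1)-th pull
  of arm a, distributed N(theta_a, 1); U t is the uniform [0,1] randomisation used at round t;
  all of these are mutually independent.\<close>
definition bandit_env ::
  "'w measure \<Rightarrow> real^'k \<Rightarrow> ('k \<Rightarrow> nat \<Rightarrow> 'w \<Rightarrow> real) \<Rightarrow> (nat \<Rightarrow> 'w \<Rightarrow> real) \<Rightarrow> bool" where
  "bandit_env M \<theta> X U \<longleftrightarrow> prob_space M
     \<and> (\<forall>a n. distributed M lborel (X a n) (\<lambda>x. ennreal (normal_density (\<theta>$a) 1 x)))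
     \<and> (\<forall>t. distributed M lborel (U t) (indicator {0..1}))
     \<and> prob_space.indep_vars M (\<lambda>_. borel)
          (\<lambda>i. case i of Inl (a, n) \<Rightarrow> X a n | Inr t \<Rightarrow> U t) UNIV"

definition emp_mean :: "('k \<Rightarrow> nat \<Rightarrow> real) \<Rightarrow> real^'k \<Rightarrow> ('k \<Rightarrow> nat) \<Rightarrow> real^'k" where
  "emp_mean x dflt N = (\<chi> a. if N a = 0 then dflt$a else (\<Sum>n<N a. x a n) / real (N a))"

text \<open>Sampling an arm from distribution pi with a uniform u (inverse CDF).\<close>
definition draw_arm :: "(real, 'k::{finite,linorder}) vec \<Rightarrow> real \<Rightarrow> 'k" where
  "draw_arm \<pi> u = (LEAST a. u < (\<Sum>b\<in>{..a}. \<pi>$b))"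

definition eps_t :: "nat \<Rightarrow> real" where
  "eps_t t = 1 / (2 * sqrt (real t))"

definition ftas_pi :: "(real^'k \<Rightarrow> real^'k) \<Rightarrow> real^'k \<Rightarrow> nat \<Rightarrow> real^'k \<Rightarrow> real^'k" where
  "ftas_pi sel pic t \<theta>h = (1 - eps_t t) *\<^sub>R sel \<theta>h + eps_t t *\<^sub>R pic"

text \<open>Pull counts N_a(t) after t rounds (rounds 1,2,...).\<close>
primrec ftas_counts ::
  "((real, 'k::{finite,linorder}) vec \<Rightarrow> (real, 'k) vec) \<Rightarrow> (real, 'k) vec \<Rightarrow> (real, 'k) vec \<Rightarrow> ('k \<Rightarrow> nat \<Rightarrow> real)
     \<Rightarrow> (nat \<Rightarrow> real) \<Rightarrow> nat \<Rightarrow> ('k \<Rightarrow> nat)" where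
  "ftas_counts sel pic dflt x u 0 = (\<lambda>a. 0)"
| "ftas_counts sel pic dflt x u (Suc t) =
     (let N = ftas_counts sel pic dflt x u t;
          a = draw_arm (ftas_pi sel pic (Suc t) (emp_mean x dflt N)) (u (Suc t))
      in N(a := Suc (N a)))"

definition ftas_emp ::
  "((real, 'k::{finite,linorder}) vec \<Rightarrow> (real, 'k) vec) \<Rightarrow> (real, 'k) vec \<Rightarrow> (real, 'k) vec
     \<Rightarrow> ('k \<Rightarrow> nat \<Rightarrow> 'w \<Rightarrow> real) \<Rightarrow> (nat \<Rightarrow> 'w \<Rightarrow> real) \<Rightarrow> 'w \<Rightarrow> nat \<Rightarrow> (real, 'k) vec" where
  "ftas_emp sel pic dflt X U \<omega> t =
     emp_mean (\<lambda>a n. X a n \<omega>) dflt (ftas_counts sel pic dflt (\<lambda>a n. X a n \<omega>) (\<lambda>s. U s \<omega>) t)"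

definition sup_norm :: "real^'k \<Rightarrow> real" where
  "sup_norm v = Max (range (\<lambda>a. \<bar>v$a\<bar>))"

end

theory Submission
  imports Defs
begin

lemma ftas_counts_Suc_cases:
  "ftas_counts sel pic dflt x u (Suc t) a = ftas_counts sel pic dflt x u t a \<or>
   ftas_counts sel pic dflt x u (Suc t) a = Suc (ftas_counts sel pic dflt x u t a)"
  by (auto simp: Let_def)

lemma ftas_counts_mono_Suc:
  "ftas_counts sel pic dflt x u t a \<le> ftas_counts sel pic dflt x u (Suc t) a"
  using ftas_counts_Suc_cases[of sel pic dflt x u t a] by linarith

lemma ftas_counts_mono:
  "s \<le> t \<Longrightarrow> ftas_counts sel pic dflt x u s a \<le> ftas_counts sel pic dflt x u t a"
proof (induction t)
  case 0 then show ?case by simp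
next
  case (Suc t)
  then show ?case using ftas_counts_mono_Suc[of sel pic dflt x u t a]
    by (cases "s = Suc t") auto
qed

lemma ftas_counts_le: "ftas_counts sel pic dflt x u t a \<le> t"
proof (induction t)
  case 0 then show ?case by simp
next
  case (Suc t)
  then show ?case using ftas_counts_Suc_cases[of sel pic dflt x u t a] by linarith
qed

lemma ftas_counts_cong:
  "(\<And>s. 1 \<le> s \<Longrightarrow> s \<le> t \<Longrightarrow> u s = u' s) \<Longrightarrow>
   ftas_counts sel pic dflt x u t = ftas_counts sel pic dflt x u' t"
proof (induction t)
  case 0 then show ?case by simp
next
  case (Suc t)
  then have "ftas_counts sel pic dflt x u t = ftas_counts sel pic dflt x u' t" by auto
  moreover have "u (Suc t) = u' (Suc t)" using Suc.prems by auto
  ultimately show ?case by (simp add: Let_def)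
qed

lemma ftas_counts_Suc_eq_iff:
  "ftas_counts sel pic dflt x u (Suc t) a = ftas_counts sel pic dflt x u t a \<longleftrightarrow>
   draw_arm (ftas_pi sel pic (Suc t) (emp_mean x dflt (ftas_counts sel pic dflt x u t))) (u (Suc t)) \<noteq> a"
  by (auto simp: Let_def)

definition psums :: "(real, 'k::{finite,linorder}) vec \<Rightarrow> 'k \<Rightarrow> real" where
  "psums \<pi> a = (\<Sum>b\<in>{..a}. \<pi>$b)"

lemma draw_arm_eqI:
  fixes \<pi> :: "(real, 'k::{finite,linorder}) vec"
  assumes nn: "\<And>b. \<pi>$b \<ge> 0"
    and l: "(\<Sum>b\<in>{..<a}. \<pi>$b) \<le> u" and r: "u < (\<Sum>b\<in>{..a}. \<pi>$b)"
  shows "draw_arm \<pi> u = a"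
  unfolding draw_arm_def
proof (rule Least_equality)
  show "u < (\<Sum>b\<in>{..a}. \<pi>$b)" by fact
next
  fix b assume b: "u < (\<Sum>c\<in>{..b}. \<pi>$c)"
  show "a \<le> b"
  proof (rule ccontr)
    assume "\<not> a \<le> b" then have "b < a" by simp
    then have "{..b} \<subseteq> {..<a}" by auto
    then have "(\<Sum>c\<in>{..b}. \<pi>$c) \<le> (\<Sum>c\<in>{..<a}. \<pi>$c)"
      by (intro sum_mono2) (auto simp: nn)
    with b l show False by linarith
  qed
qed

lemma borel_measurable_vecI:
  fixes f :: "'a \<Rightarrow> real^'k"
  assumes "\<And>i. (\<lambda>x. f x $ i) \<in> borel_measurable M"
  shows "f \<in> borel_measurable M"
proof (subst borel_measurable_euclidean_space, intro ballI)
  fix b :: "real^'k" assume "b \<in> Basis"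
  then obtain i where b: "b = axis i 1" by (auto simp: Basis_vec_def)
  show "(\<lambda>x. f x \<bullet> b) \<in> borel_measurable M"
    using assms[of i] by (simp add: b cart_eq_inner_axis[symmetric])
qed

lemma vec_nth_measurable[measurable]:
  fixes f :: "'a \<Rightarrow> real^'k"
  assumes "f \<in> borel_measurable M"
  shows "(\<lambda>x. f x $ i) \<in> borel_measurable M"
  using measurable_compose[OF assms borel_measurable_nth] by simp

lemma draw_arm_iff:
  fixes \<pi> :: "(real, 'k::{finite,linorder}) vec"
  shows "draw_arm \<pi> u = a \<longleftrightarrow>
    (u < (\<Sum>c\<in>{..a}. \<pi>$c) \<and> (\<forall>b. b < a \<longrightarrow> \<not> u < (\<Sum>c\<in>{..b}. \<pi>$c)))
    \<or> ((\<forall>b. \<not> u < (\<Sum>c\<in>{..b}. \<pi>$c)) \<and> a = (LEAST b::'k. False))"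
proof (cases "\<exists>b. u < (\<Sum>c\<in>{..b}. \<pi>$c)")
  case True
  define P where "P = (\<lambda>a. u < (\<Sum>c\<in>{..a}. \<pi>$c))"
  from True obtain b where b: "P b" unfolding P_def by auto
  define m where "m = Min {a. P a}"
  have Pm: "P m" unfolding m_def using b by (intro Min_in[of "{a. P a}", simplified]) auto
  have mle: "\<And>y. P y \<Longrightarrow> m \<le> y" unfolding m_def by (intro Min_le) auto
  have Lm: "(LEAST a. P a) = m" by (rule Least_equality) (use Pm mle in auto)
  have L1: "P (LEAST a. P a)" using Lm Pm by simp
  have L2: "\<And>c. c < (LEAST a. P a) \<Longrightarrow> \<not> P c" using Lm mle by (auto simp: not_le[symmetric])
  have dr: "draw_arm \<pi> u = (LEAST a. P a)" unfolding draw_arm_def P_def ..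
  show ?thesis
  proof
    assume "draw_arm \<pi> u = a"
    then show "(u < (\<Sum>c\<in>{..a}. \<pi>$c) \<and> (\<forall>b. b < a \<longrightarrow> \<not> u < (\<Sum>c\<in>{..b}. \<pi>$c)))
    \<or> ((\<forall>b. \<not> u < (\<Sum>c\<in>{..b}. \<pi>$c)) \<and> a = (LEAST b::'k. False))"
      using L1 L2 dr unfolding P_def by auto
  next
    assume H: "(u < (\<Sum>c\<in>{..a}. \<pi>$c) \<and> (\<forall>b. b < a \<longrightarrow> \<not> u < (\<Sum>c\<in>{..b}. \<pi>$c)))
    \<or> ((\<forall>b. \<not> u < (\<Sum>c\<in>{..b}. \<pi>$c)) \<and> a = (LEAST b::'k. False))"
    then have "P a \<and> (\<forall>b. b < a \<longrightarrow> \<not> P b)" using True unfolding P_def by auto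
    then have "(LEAST a. P a) = a" by (intro Least_equality) (auto simp: not_less[symmetric])
    then show "draw_arm \<pi> u = a" using dr by simp
  qed
next
  case False
  then have "(\<lambda>a. u < (\<Sum>c\<in>{..a}. \<pi>$c)) = (\<lambda>_. False)" by auto
  then have "draw_arm \<pi> u = (LEAST b::'k. False)" unfolding draw_arm_def by (simp only:)
  then show ?thesis using False by auto
qed

lemma measurable_draw_arm[measurable]:
  fixes g :: "'a \<Rightarrow> (real, 'k::{finite,linorder}) vec"
  assumes [measurable]: "g \<in> borel_measurable M" "h \<in> borel_measurable M"
  shows "(\<lambda>x. draw_arm (g x) (h x)) \<in> measurable M (count_space UNIV)"
proof (subst measurable_count_space_eq2_countable, intro conjI ballI)
  show "(\<lambda>x. draw_arm (g x) (h x)) \<in> space M \<rightarrow> UNIV" by simp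
  fix a :: 'k
  have "(\<lambda>x. draw_arm (g x) (h x)) -` {a} \<inter> space M =
     {x\<in>space M. (h x < (\<Sum>c\<in>{..a}. g x$c) \<and> (\<forall>b. b < a \<longrightarrow> \<not> h x < (\<Sum>c\<in>{..b}. g x$c)))
    \<or> ((\<forall>b. \<not> h x < (\<Sum>c\<in>{..b}. g x$c)) \<and> a = (LEAST b::'k. False))}"
    apply (rule set_eqI)
    apply (simp only: vimage_def Int_iff mem_Collect_eq singleton_iff draw_arm_iff)
    by blast
  also have "\<dots> \<in> sets M" by measurable
  finally show "(\<lambda>x. draw_arm (g x) (h x)) -` {a} \<inter> space M \<in> sets M" .
qed

lemma draw_arm_prob:
  fixes \<pi> :: "(real, 'k::{finite,linorder}) vec"
  assumes nn: "\<And>b. \<pi>$b \<ge> 0" and s1: "(\<Sum>b\<in>UNIV. \<pi>$b) \<le> 1"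
  shows "emeasure (density lborel (indicator {0..1::real})) {u. draw_arm \<pi> u \<noteq> a} \<le> ennreal (1 - \<pi>$a)"
proof -
  define c where "c = (\<Sum>b\<in>{..<a}. \<pi>$b)"
  define d where "d = (\<Sum>b\<in>{..a}. \<pi>$b)"
  have d: "d = c + \<pi>$a" unfolding c_def d_def
  proof -
    have "{..a} = insert a {..<a}" by auto
    then show "(\<Sum>b\<in>{..a}. \<pi>$b) = (\<Sum>b\<in>{..<a}. \<pi>$b) + \<pi>$a" by simp
  qed
  have c0: "0 \<le> c" unfolding c_def by (intro sum_nonneg) (auto simp: nn)
  have "d \<le> (\<Sum>b\<in>UNIV. \<pi>$b)" unfolding d_def by (intro sum_mono2) (auto simp: nn)
  with s1 have d1: "d \<le> 1" by simp
  have sub: "{u. draw_arm \<pi> u \<noteq> a} \<subseteq> {..<c} \<union> {d..}"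
  proof
    fix u assume "u \<in> {u. draw_arm \<pi> u \<noteq> a}"
    then have "draw_arm \<pi> u \<noteq> a" by simp
    then show "u \<in> {..<c} \<union> {d..}"
      using draw_arm_eqI[of \<pi> a u] nn unfolding c_def d_def by force
  qed
  have "emeasure (density lborel (indicator {0..1::real})) {u. draw_arm \<pi> u \<noteq> a}
      \<le> emeasure (density lborel (indicator {0..1::real})) ({..<c} \<union> {d..})"
    by (rule emeasure_mono[OF sub]) simp
  also have "\<dots> = emeasure lborel ({0..1} \<inter> ({..<c} \<union> {d..}))"
    by (rule emeasure_restricted) auto
  also have "{0..1} \<inter> ({..<c} \<union> {d..}) \<subseteq> {0..c} \<union> {d..1}" by auto
  then have "emeasure lborel ({0..1} \<inter> ({..<c} \<union> {d..})) \<le> emeasure lborel ({0..c} \<union> {d..1::real})"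
    by (intro emeasure_mono) auto
  also have "\<dots> \<le> emeasure lborel {0..c} + emeasure lborel {d..1::real}"
    by (rule emeasure_subadditive) auto
  also have "\<dots> = ennreal c + ennreal (1 - d)" using c0 d1 by simp
  also have "\<dots> = ennreal (1 - \<pi>$a)" using c0 d1 d nn[of a] by (simp add: ennreal_plus[symmetric])
  finally show ?thesis .
qed

definition cntY :: "((real, 'k::{finite,linorder}) vec \<Rightarrow> (real, 'k) vec) \<Rightarrow> (real, 'k) vec \<Rightarrow> (real, 'k) vec
   \<Rightarrow> (('k \<times> nat) + nat \<Rightarrow> real) \<Rightarrow> nat \<Rightarrow> ('k \<Rightarrow> nat)" where
  "cntY sel pic dflt y t = ftas_counts sel pic dflt (\<lambda>a n. y (Inl (a,n))) (\<lambda>s. y (Inr s)) t"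

lemma measurable_emp_mean_fixed:
  fixes dflt :: "(real, 'k::{finite,linorder}) vec"
  assumes J: "\<And>a n. Inl (a,n) \<in> J"
  shows "(\<lambda>y. emp_mean (\<lambda>a n. y (Inl (a,n))) dflt N) \<in> borel_measurable (PiM J (\<lambda>_. borel))"
proof (rule borel_measurable_vecI)
  fix a
  have [measurable]: "\<And>n. (\<lambda>y. y (Inl (a,n))) \<in> borel_measurable (PiM J (\<lambda>_. borel))"
    using J by (intro measurable_component_singleton) auto
  show "(\<lambda>y. emp_mean (\<lambda>a n. y (Inl (a,n))) dflt N $ a) \<in> borel_measurable (PiM J (\<lambda>_. borel))"
    unfolding emp_mean_def by simp
qed

lemma measurable_cntY:
  fixes sel :: "(real, 'k::{finite,linorder}) vec \<Rightarrow> (real, 'k) vec"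
  assumes sel[measurable]: "sel \<in> borel_measurable borel"
    and J: "\<And>a n. Inl (a,n) \<in> J" and JR: "\<And>s. 1 \<le> s \<Longrightarrow> s \<le> t \<Longrightarrow> Inr s \<in> J"
  shows "(\<lambda>y. cntY sel pic dflt y t) \<in> measurable (PiM J (\<lambda>_. borel)) (count_space UNIV)"
  using JR
proof (induction t)
  case 0
  then show ?case by (simp add: cntY_def)
next
  case (Suc t)
  let ?M = "PiM J (\<lambda>_. borel) :: (('k \<times> nat) + nat \<Rightarrow> real) measure"
  have IH[measurable]: "(\<lambda>y. cntY sel pic dflt y t) \<in> measurable ?M (count_space UNIV)"
    using Suc by auto
  have [measurable]: "(\<lambda>y. y (Inr (Suc t))) \<in> borel_measurable ?M"
    using Suc.prems by (intro measurable_component_singleton) auto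
  have em[measurable]: "(\<lambda>y. emp_mean (\<lambda>a n. y (Inl (a,n))) dflt (cntY sel pic dflt y t)) \<in> borel_measurable ?M"
    by (rule measurable_compose_countable[where f="\<lambda>N y. emp_mean (\<lambda>a n. y (Inl (a,n))) dflt N"])
       (auto intro: measurable_emp_mean_fixed J)
  have pim[measurable]: "(\<lambda>y. ftas_pi sel pic (Suc t) (emp_mean (\<lambda>a n. y (Inl (a,n))) dflt (cntY sel pic dflt y t))) \<in> borel_measurable ?M"
    unfolding ftas_pi_def by measurable
  have dm[measurable]: "(\<lambda>y. draw_arm (ftas_pi sel pic (Suc t) (emp_mean (\<lambda>a n. y (Inl (a,n))) dflt (cntY sel pic dflt y t))) (y (Inr (Suc t))))
      \<in> measurable ?M (count_space UNIV)"
    by (rule measurable_draw_arm) measurable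
  have eq: "(\<lambda>y. cntY sel pic dflt y (Suc t)) = (\<lambda>y. (\<lambda>N b. N(b := Suc (N b))) (cntY sel pic dflt y t)
      (draw_arm (ftas_pi sel pic (Suc t) (emp_mean (\<lambda>a n. y (Inl (a,n))) dflt (cntY sel pic dflt y t))) (y (Inr (Suc t)))))"
    by (simp add: cntY_def Let_def)
  show ?case unfolding eq
    by (rule measurable_compose_countable[where f="\<lambda>N y. (\<lambda>N b. N(b := Suc (N b))) N
      (draw_arm (ftas_pi sel pic (Suc t) (emp_mean (\<lambda>a n. y (Inl (a,n))) dflt (cntY sel pic dflt y t))) (y (Inr (Suc t))))"])
      (auto intro!: measurable_compose_countable[where f="\<lambda>b y. (\<lambda>N b. N(b := Suc (N b))) _ b"])
qed

lemma (in prob_space) cond_step: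
  fixes NN :: "'y measure" and f :: "'y \<Rightarrow> (real, 'k::{finite,linorder}) vec" and W :: "'a \<Rightarrow> 'y" and g :: "'y \<Rightarrow> real"
  assumes ind: "indep_var NN Y NN2 W" and g[measurable]: "g \<in> borel_measurable NN2"
    and Vd: "distributed M lborel (\<lambda>\<omega>. g (W \<omega>)) (indicator {0..1})"
    and A: "A \<in> sets NN" and f[measurable]: "f \<in> borel_measurable NN"
    and nn: "\<And>y b. y \<in> space NN \<Longrightarrow> 0 \<le> f y $ b"
    and s1: "\<And>y. y \<in> space NN \<Longrightarrow> (\<Sum>b\<in>UNIV. f y $ b) \<le> 1"
    and q: "\<And>y. y \<in> space NN \<Longrightarrow> q \<le> f y $ a"
  shows "measure M {\<omega>\<in>space M. Y \<omega> \<in> A \<and> draw_arm (f (Y \<omega>)) (g (W \<omega>)) \<noteq> a}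
       \<le> (1 - q) * measure M {\<omega>\<in>space M. Y \<omega> \<in> A}"
proof -
  have rv: "random_variable NN Y" "random_variable NN2 W" and
    pr: "distr M NN Y \<Otimes>\<^sub>M distr M NN2 W = distr M (NN \<Otimes>\<^sub>M NN2) (\<lambda>x. (Y x, W x))"
    using ind unfolding indep_var_distribution_eq by auto
  have [measurable]: "Y \<in> measurable M NN" "W \<in> measurable M NN2" using rv by auto
  have dV: "distr (distr M NN2 W) borel g = density lborel (indicator {0..1})"
  proof -
    have "distr (distr M NN2 W) borel g = distr M borel (\<lambda>\<omega>. g (W \<omega>))"
      by (subst distr_distr) (auto simp: comp_def)
    also have "\<dots> = distr M lborel (\<lambda>\<omega>. g (W \<omega>))" by (rule distr_cong) auto
    also have "\<dots> = density lborel (indicator {0..1})"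
      using Vd unfolding distributed_def by auto
    finally show ?thesis .
  qed
  define S where "S = {p \<in> space (NN \<Otimes>\<^sub>M NN2). fst p \<in> A \<and> draw_arm (f (fst p)) (g (snd p)) \<noteq> a}"
  have [measurable]: "A \<in> sets NN" by fact
  have S: "S \<in> sets (NN \<Otimes>\<^sub>M NN2)" unfolding S_def by measurable
  interpret V: prob_space "distr M NN2 W" by (rule prob_space_distr) simp
  have q1: "q \<le> 1"
  proof -
    obtain \<omega> where "\<omega> \<in> space M" using not_empty by blast
    then have yN: "Y \<omega> \<in> space NN" by (rule measurable_space[of Y M NN, rotated]) simp
    have "f (Y \<omega>) $ a \<le> (\<Sum>b\<in>UNIV. f (Y \<omega>) $ b)"
      by (rule member_le_sum) (use nn yN in auto)
    then show ?thesis using q[OF yN] s1[OF yN] by linarith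
  qed
  have "emeasure M {\<omega>\<in>space M. Y \<omega> \<in> A \<and> draw_arm (f (Y \<omega>)) (g (W \<omega>)) \<noteq> a}
      = emeasure (distr M (NN \<Otimes>\<^sub>M NN2) (\<lambda>x. (Y x, W x))) S"
    using S by (subst emeasure_distr) (auto simp: S_def space_pair_measure intro!: arg_cong[where f="emeasure M"] measurable_space[of Y M NN] measurable_space[of W M NN2])
  also have "\<dots> = emeasure (distr M NN Y \<Otimes>\<^sub>M distr M NN2 W) S" by (simp add: pr)
  also have "\<dots> = (\<integral>\<^sup>+y. emeasure (distr M NN2 W) (Pair y -` S) \<partial>distr M NN Y)"
    using S by (intro V.emeasure_pair_measure_alt) simp
  also have "\<dots> \<le> (\<integral>\<^sup>+y. ennreal (1 - q) * indicator A y \<partial>distr M NN Y)"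
  proof (rule nn_integral_mono)
    fix y assume y: "y \<in> space (distr M NN Y)"
    then have yN: "y \<in> space NN" by simp
    show "emeasure (distr M NN2 W) (Pair y -` S) \<le> ennreal (1 - q) * indicator A y"
    proof (cases "y \<in> A")
      case True
      then have "Pair y -` S = g -` {v. draw_arm (f y) v \<noteq> a} \<inter> space NN2" using yN by (auto simp: S_def space_pair_measure)
      moreover have "{v. draw_arm (f y) v \<noteq> a} \<in> sets borel"
      proof -
        have "(\<lambda>v::real. draw_arm (f y) v) \<in> measurable borel (count_space UNIV)" by measurable
        then have "(\<lambda>v::real. draw_arm (f y) v) -` (UNIV - {a}) \<inter> space borel \<in> sets borel" by (rule measurable_sets) simp
        then show ?thesis by (simp add: vimage_def Collect_neg_eq[symmetric])
      qed
      ultimately have "emeasure (distr M NN2 W) (Pair y -` S) = emeasure (distr (distr M NN2 W) borel g) {v. draw_arm (f y) v \<noteq> a}"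
        by (subst emeasure_distr) auto
      also have "\<dots> = emeasure (density lborel (indicator {0..1::real})) {v. draw_arm (f y) v \<noteq> a}"
        by (simp add: dV)
      finally have "emeasure (distr M NN2 W) (Pair y -` S) = emeasure (density lborel (indicator {0..1::real})) {v. draw_arm (f y) v \<noteq> a}" .
      also have "\<dots> \<le> ennreal (1 - f y $ a)" by (rule draw_arm_prob) (use nn s1 yN in auto)
      also have "\<dots> \<le> ennreal (1 - q)" using q[OF yN] by (intro ennreal_leI) simp
      finally show ?thesis using True by simp
    next
      case False
      then have "Pair y -` S = {}" by (auto simp: S_def)
      then show ?thesis by simp
    qed
  qed
  also have "\<dots> = ennreal (1 - q) * emeasure (distr M NN Y) A"
    using A by (simp add: nn_integral_cmult_indicator)
  also have "\<dots> = ennreal (1 - q) * emeasure M {\<omega>\<in>space M. Y \<omega> \<in> A}"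
    using A by (subst emeasure_distr) (auto simp: vimage_def Int_def conj_commute)
  finally have "ennreal (measure M {\<omega>\<in>space M. Y \<omega> \<in> A \<and> draw_arm (f (Y \<omega>)) (g (W \<omega>)) \<noteq> a})
      \<le> ennreal ((1 - q) * measure M {\<omega>\<in>space M. Y \<omega> \<in> A})"
    using q1 by (simp add: emeasure_eq_measure ennreal_mult)
  moreover have "0 \<le> (1 - q) * measure M {\<omega>\<in>space M. Y \<omega> \<in> A}" using q1 by simp
  ultimately show ?thesis by (simp add: ennreal_le_iff)
qed

definition Fm :: "('k \<Rightarrow> nat \<Rightarrow> 'w \<Rightarrow> real) \<Rightarrow> (nat \<Rightarrow> 'w \<Rightarrow> real) \<Rightarrow> ('k \<times> nat) + nat \<Rightarrow> 'w \<Rightarrow> real" where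
  "Fm X U = (\<lambda>i. case i of Inl (a, n) \<Rightarrow> X a n | Inr t \<Rightarrow> U t)"

definition Nc where
  "Nc sel pic dflt X U t \<omega> = ftas_counts sel pic dflt (\<lambda>a n. X a n \<omega>) (\<lambda>s. U s \<omega>) t"

lemma cntY_restrict:
  assumes "t \<le> r'"
  shows "cntY sel pic dflt (restrict (\<lambda>i. Fm X U i \<omega>) (UNIV - {Inr (Suc r')})) t = Nc sel pic dflt X U t \<omega>"
proof -
  have xeq: "(\<lambda>a n. (restrict (\<lambda>i. Fm X U i \<omega>) (UNIV - {Inr (Suc r')})) (Inl (a,n))) = (\<lambda>a n. X a n \<omega>)"
    by (simp add: Fm_def fun_eq_iff)
  show ?thesis
    unfolding cntY_def Nc_def xeq
    by (rule ftas_counts_cong) (use assms in \<open>auto simp: Fm_def\<close>)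
qed

lemma measurable_pi_Y:
  fixes sel :: "(real, 'k::{finite,linorder}) vec \<Rightarrow> (real, 'k) vec"
  assumes sel[measurable]: "sel \<in> borel_measurable borel"
    and J: "\<And>a n. Inl (a,n) \<in> J" and JR: "\<And>s. 1 \<le> s \<Longrightarrow> s \<le> t \<Longrightarrow> Inr s \<in> J"
  shows "(\<lambda>y. ftas_pi sel pic r (emp_mean (\<lambda>a n. y (Inl (a,n))) dflt (cntY sel pic dflt y t))) \<in> borel_measurable (PiM J (\<lambda>_. borel))"
proof -
  have [measurable]: "(\<lambda>y. cntY sel pic dflt y t) \<in> measurable (PiM J (\<lambda>_. borel)) (count_space UNIV)"
    by (rule measurable_cntY) (use assms in auto)
  have em[measurable]: "(\<lambda>y. emp_mean (\<lambda>a n. y (Inl (a,n))) dflt (cntY sel pic dflt y t)) \<in> borel_measurable (PiM J (\<lambda>_. borel))"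
    by (rule measurable_compose_countable[where f="\<lambda>N y. emp_mean (\<lambda>a n. y (Inl (a,n))) dflt N"])
       (auto intro: measurable_emp_mean_fixed J)
  show ?thesis unfolding ftas_pi_def by measurable
qed

lemma block_step:
  fixes sel :: "(real, 'k::{finite,linorder}) vec \<Rightarrow> (real, 'k) vec" and \<theta> :: "(real, 'k) vec"
  assumes env: "bandit_env M \<theta> X U" and sel[measurable]: "sel \<in> borel_measurable borel"
    and nn: "\<And>v b. 0 \<le> ftas_pi sel pic (Suc r') v $ b"
    and s1: "\<And>v. (\<Sum>b\<in>UNIV. ftas_pi sel pic (Suc r') v $ b) \<le> 1"
    and q: "\<And>v. q \<le> ftas_pi sel pic (Suc r') v $ a"
    and sr: "s \<le> r'"
  shows "measure M {\<omega>\<in>space M. Nc sel pic dflt X U (Suc r') \<omega> a = Nc sel pic dflt X U s \<omega> a}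
     \<le> (1 - q) * measure M {\<omega>\<in>space M. Nc sel pic dflt X U r' \<omega> a = Nc sel pic dflt X U s \<omega> a}"
proof -
  interpret prob_space M using env by (simp add: bandit_env_def)
  have ind: "indep_vars (\<lambda>_. borel) (Fm X U) UNIV"
    using env by (simp add: bandit_env_def Fm_def)
  define J where "J = (UNIV :: (('k \<times> nat) + nat) set) - {Inr (Suc r')}"
  define Y where "Y = (\<lambda>\<omega>. restrict (\<lambda>i. Fm X U i \<omega>) J)"
  define W where "W = (\<lambda>\<omega>. restrict (\<lambda>i. Fm X U i \<omega>) {Inr (Suc r')})"
  define g where "g = (\<lambda>w::('k \<times> nat) + nat \<Rightarrow> real. w (Inr (Suc r')))"
  define f where "f = (\<lambda>y. ftas_pi sel pic (Suc r') (emp_mean (\<lambda>a n. y (Inl (a,n))) dflt (cntY sel pic dflt y r')))"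
  define A where "A = {y \<in> space (PiM J (\<lambda>_. borel)). cntY sel pic dflt y r' a = cntY sel pic dflt y s a}"
  have iv: "indep_var (PiM J (\<lambda>_. borel)) Y (PiM {Inr (Suc r')} (\<lambda>_. borel)) W"
    unfolding Y_def W_def J_def by (rule indep_var_restrict[OF ind]) auto
  have gm: "g \<in> borel_measurable (PiM {Inr (Suc r')} (\<lambda>_. borel))"
    unfolding g_def by (rule measurable_component_singleton) simp
  have gW: "(\<lambda>\<omega>. g (W \<omega>)) = U (Suc r')" by (simp add: g_def W_def Fm_def fun_eq_iff)
  have gW': "\<And>\<omega>. g (W \<omega>) = U (Suc r') \<omega>" by (simp add: g_def W_def Fm_def)
  have Vd: "distributed M lborel (\<lambda>\<omega>. g (W \<omega>)) (indicator {0..1})"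
    unfolding gW using env by (simp add: bandit_env_def)
  have J1: "\<And>a n. Inl (a,n) \<in> J" and J2: "\<And>t. 1 \<le> t \<Longrightarrow> t \<le> r' \<Longrightarrow> Inr t \<in> J" by (auto simp: J_def)
  have fm: "f \<in> borel_measurable (PiM J (\<lambda>_. borel))"
    unfolding f_def by (rule measurable_pi_Y[OF sel J1 J2])
  have c1[measurable]: "(\<lambda>y. cntY sel pic dflt y r') \<in> measurable (PiM J (\<lambda>_. borel)) (count_space UNIV)"
    by (rule measurable_cntY[OF sel J1 J2])
  have c2[measurable]: "(\<lambda>y. cntY sel pic dflt y s) \<in> measurable (PiM J (\<lambda>_. borel)) (count_space UNIV)"
    by (rule measurable_cntY[OF sel J1]) (use J2 sr in auto)
  have [measurable]: "(\<lambda>y. cntY sel pic dflt y r' a) \<in> measurable (PiM J (\<lambda>_. borel)) (count_space UNIV)"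
    using measurable_compose[OF c1, of "\<lambda>N. N a" "count_space UNIV"] by simp
  have [measurable]: "(\<lambda>y. cntY sel pic dflt y s a) \<in> measurable (PiM J (\<lambda>_. borel)) (count_space UNIV)"
    using measurable_compose[OF c2, of "\<lambda>N. N a" "count_space UNIV"] by simp
  have Am: "A \<in> sets (PiM J (\<lambda>_. borel))" unfolding A_def by measurable
  have main: "measure M {\<omega>\<in>space M. Y \<omega> \<in> A \<and> draw_arm (f (Y \<omega>)) (g (W \<omega>)) \<noteq> a}
       \<le> (1 - q) * measure M {\<omega>\<in>space M. Y \<omega> \<in> A}"
    by (rule cond_step[OF iv gm Vd Am fm]) (use nn s1 q in \<open>auto simp: f_def\<close>)
  have Ysp: "\<And>\<omega>. Y \<omega> \<in> space (PiM J (\<lambda>_. borel))" by (simp add: Y_def space_PiM)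
  have cY: "\<And>\<omega> t. t \<le> r' \<Longrightarrow> cntY sel pic dflt (Y \<omega>) t = Nc sel pic dflt X U t \<omega>"
    unfolding Y_def J_def by (rule cntY_restrict)
  have xY: "\<And>\<omega>. (\<lambda>a n. Y \<omega> (Inl (a,n))) = (\<lambda>a n. X a n \<omega>)" by (simp add: Y_def J_def Fm_def fun_eq_iff)
  have E1: "{\<omega>\<in>space M. Y \<omega> \<in> A} = {\<omega>\<in>space M. Nc sel pic dflt X U r' \<omega> a = Nc sel pic dflt X U s \<omega> a}"
    using Ysp cY sr by (auto simp: A_def)
  have E2: "{\<omega>\<in>space M. Y \<omega> \<in> A \<and> draw_arm (f (Y \<omega>)) (g (W \<omega>)) \<noteq> a}
     = {\<omega>\<in>space M. Nc sel pic dflt X U (Suc r') \<omega> a = Nc sel pic dflt X U s \<omega> a}"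
  proof -
    have "Nc sel pic dflt X U (Suc r') \<omega> a = Nc sel pic dflt X U s \<omega> a \<longleftrightarrow>
        Nc sel pic dflt X U r' \<omega> a = Nc sel pic dflt X U s \<omega> a \<and> draw_arm (f (Y \<omega>)) (g (W \<omega>)) \<noteq> a" for \<omega>
    proof -
      have d: "draw_arm (f (Y \<omega>)) (g (W \<omega>)) \<noteq> a \<longleftrightarrow> Nc sel pic dflt X U (Suc r') \<omega> a = Nc sel pic dflt X U r' \<omega> a"
        unfolding f_def cY[OF order_refl] xY gW' Nc_def ftas_counts_Suc_eq_iff ..
      have m1: "Nc sel pic dflt X U s \<omega> a \<le> Nc sel pic dflt X U r' \<omega> a"
        unfolding Nc_def by (rule ftas_counts_mono[OF sr])
      have m2: "Nc sel pic dflt X U r' \<omega> a \<le> Nc sel pic dflt X U (Suc r') \<omega> a"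
        unfolding Nc_def by (rule ftas_counts_mono) simp
      show ?thesis using d m1 m2 by linarith
    qed
    then show ?thesis using E1 by auto
  qed
  show ?thesis using main unfolding E1 E2 .
qed

lemma Nc_measurable:
  fixes sel :: "(real, 'k::{finite,linorder}) vec \<Rightarrow> (real, 'k) vec" and \<theta> :: "(real, 'k) vec"
  assumes env: "bandit_env M \<theta> X U" and sel[measurable]: "sel \<in> borel_measurable borel"
  shows "Nc sel pic dflt X U t \<in> measurable M (count_space UNIV)"
proof -
  interpret prob_space M using env by (simp add: bandit_env_def)
  have ind: "indep_vars (\<lambda>_. borel) (Fm X U) UNIV"
    using env by (simp add: bandit_env_def Fm_def)
  have Zm: "(\<lambda>\<omega>. restrict (\<lambda>i. Fm X U i \<omega>) UNIV) \<in> measurable M (PiM UNIV (\<lambda>_. borel))"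
    by (rule measurable_restrict) (use ind in \<open>auto simp: indep_vars_def\<close>)
  have cm: "(\<lambda>y. cntY sel pic dflt y t) \<in> measurable (PiM UNIV (\<lambda>_. borel)) (count_space UNIV)"
    by (rule measurable_cntY[OF sel]) auto
  have "Nc sel pic dflt X U t = (\<lambda>\<omega>. cntY sel pic dflt (restrict (\<lambda>i. Fm X U i \<omega>) UNIV) t)"
    by (simp add: Nc_def cntY_def Fm_def fun_eq_iff)
  then show ?thesis using measurable_compose[OF Zm cm] by simp
qed

lemma Nc_set_measurable:
  fixes sel :: "(real, 'k::{finite,linorder}) vec \<Rightarrow> (real, 'k) vec" and \<theta> :: "(real, 'k) vec"
  assumes env: "bandit_env M \<theta> X U" and sel: "sel \<in> borel_measurable borel"
  shows "{\<omega>\<in>space M. P (Nc sel pic dflt X U t \<omega>) (Nc sel pic dflt X U s \<omega>)} \<in> sets M"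
proof -
  have [measurable]: "Nc sel pic dflt X U t \<in> measurable M (count_space UNIV)"
     "Nc sel pic dflt X U s \<in> measurable M (count_space UNIV)"
    using Nc_measurable[OF env sel] by auto
  have "(\<lambda>\<omega>. (Nc sel pic dflt X U t \<omega>, Nc sel pic dflt X U s \<omega>)) \<in> measurable M (count_space UNIV \<Otimes>\<^sub>M count_space UNIV)"
    by measurable
  then have "(\<lambda>\<omega>. (Nc sel pic dflt X U t \<omega>, Nc sel pic dflt X U s \<omega>)) \<in> measurable M (count_space UNIV)"
    by (simp add: pair_measure_countable)
  then have "(\<lambda>\<omega>. (Nc sel pic dflt X U t \<omega>, Nc sel pic dflt X U s \<omega>)) -` {p. P (fst p) (snd p)} \<inter> space M \<in> sets M"
    by (rule measurable_sets) simp
  then show ?thesis by (simp add: vimage_def Int_def conj_commute)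
qed

lemma block_bound:
  fixes sel :: "(real, 'k::{finite,linorder}) vec \<Rightarrow> (real, 'k) vec" and \<theta> :: "(real, 'k) vec"
  assumes env: "bandit_env M \<theta> X U" and sel: "sel \<in> borel_measurable borel"
    and nn: "\<And>r v b. s < r \<Longrightarrow> r \<le> s + L \<Longrightarrow> 0 \<le> ftas_pi sel pic r v $ b"
    and s1: "\<And>r v. s < r \<Longrightarrow> r \<le> s + L \<Longrightarrow> (\<Sum>b\<in>UNIV. ftas_pi sel pic r v $ b) \<le> 1"
    and q: "\<And>r v. s < r \<Longrightarrow> r \<le> s + L \<Longrightarrow> q \<le> ftas_pi sel pic r v $ a"
    and q1: "q \<le> 1"
  shows "measure M {\<omega>\<in>space M. Nc sel pic dflt X U (s + L) \<omega> a = Nc sel pic dflt X U s \<omega> a} \<le> (1 - q) ^ L"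
  using nn s1 q
proof (induction L)
  case 0
  interpret prob_space M using env by (simp add: bandit_env_def)
  show ?case by simp
next
  case (Suc L)
  have "measure M {\<omega>\<in>space M. Nc sel pic dflt X U (Suc (s + L)) \<omega> a = Nc sel pic dflt X U s \<omega> a}
     \<le> (1 - q) * measure M {\<omega>\<in>space M. Nc sel pic dflt X U (s + L) \<omega> a = Nc sel pic dflt X U s \<omega> a}"
    by (rule block_step[OF env sel]) (use Suc.prems in auto)
  also have "\<dots> \<le> (1 - q) * (1 - q) ^ L"
    by (rule mult_left_mono) (use Suc q1 in auto)
  finally show ?case by simp
qed

lemma count_bound:
  fixes sel :: "(real, 'k::{finite,linorder}) vec \<Rightarrow> (real, 'k) vec" and \<theta> :: "(real, 'k) vec"
  assumes env: "bandit_env M \<theta> X U" and sel: "sel \<in> borel_measurable borel"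
    and nn: "\<And>r v b. 1 \<le> r \<Longrightarrow> r \<le> t0 \<Longrightarrow> 0 \<le> ftas_pi sel pic r v $ b"
    and s1: "\<And>r v. 1 \<le> r \<Longrightarrow> r \<le> t0 \<Longrightarrow> (\<Sum>b\<in>UNIV. ftas_pi sel pic r v $ b) \<le> 1"
    and q: "\<And>r v. 1 \<le> r \<Longrightarrow> r \<le> t0 \<Longrightarrow> q \<le> ftas_pi sel pic r v $ a"
    and q1: "q \<le> 1" and dL: "d * L \<le> t0"
  shows "measure M {\<omega>\<in>space M. Nc sel pic dflt X U t0 \<omega> a < d} \<le> real d * (1 - q) ^ L"
proof -
  interpret prob_space M using env by (simp add: bandit_env_def)
  define B where "B = (\<lambda>j. {\<omega>\<in>space M. Nc sel pic dflt X U (j * L + L) \<omega> a = Nc sel pic dflt X U (j * L) \<omega> a})"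
  have sub: "{\<omega>\<in>space M. Nc sel pic dflt X U t0 \<omega> a < d} \<subseteq> (\<Union>j\<in>{..<d}. B j)"
  proof
    fix \<omega> assume w: "\<omega> \<in> {\<omega>\<in>space M. Nc sel pic dflt X U t0 \<omega> a < d}"
    show "\<omega> \<in> (\<Union>j\<in>{..<d}. B j)"
    proof (rule ccontr)
      assume "\<omega> \<notin> (\<Union>j\<in>{..<d}. B j)"
      then have ne: "\<And>j. j < d \<Longrightarrow> Nc sel pic dflt X U (j * L + L) \<omega> a \<noteq> Nc sel pic dflt X U (j * L) \<omega> a"
        using w by (auto simp: B_def)
      have mono: "\<And>s t. s \<le> t \<Longrightarrow> Nc sel pic dflt X U s \<omega> a \<le> Nc sel pic dflt X U t \<omega> a"
        unfolding Nc_def by (rule ftas_counts_mono)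
      have "j \<le> d \<Longrightarrow> j \<le> Nc sel pic dflt X U (j * L) \<omega> a" for j
      proof (induction j)
        case 0 then show ?case by simp
      next
        case (Suc j)
        then have "j \<le> Nc sel pic dflt X U (j * L) \<omega> a" by simp
        moreover have "Nc sel pic dflt X U (j * L) \<omega> a \<le> Nc sel pic dflt X U (j * L + L) \<omega> a" by (rule mono) simp
        moreover have "Nc sel pic dflt X U (j * L + L) \<omega> a \<noteq> Nc sel pic dflt X U (j * L) \<omega> a" using ne Suc.prems by simp
        ultimately show ?case by (simp add: add.commute)
      qed
      then have "d \<le> Nc sel pic dflt X U (d * L) \<omega> a" by simp
      also have "\<dots> \<le> Nc sel pic dflt X U t0 \<omega> a" by (rule mono[OF dL])
      finally show False using w by simp
    qed
  qed
  have Bm: "\<And>j. B j \<in> sets M" unfolding B_def by (rule Nc_set_measurable[OF env sel])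
  have "measure M {\<omega>\<in>space M. Nc sel pic dflt X U t0 \<omega> a < d} \<le> measure M (\<Union>j\<in>{..<d}. B j)"
    by (rule finite_measure_mono[OF sub]) (use Bm in auto)
  also have "\<dots> \<le> (\<Sum>j<d. measure M (B j))"
    by (rule finite_measure_subadditive_finite) (use Bm in auto)
  also have "\<dots> \<le> (\<Sum>j<d. (1 - q) ^ L)"
  proof (rule sum_mono)
    fix j assume j: "j \<in> {..<d}"
    have jL: "j * L + L \<le> t0"
    proof -
      have "j * L + L = Suc j * L" by simp
      also have "\<dots> \<le> d * L" using j by (intro mult_right_mono) auto
      finally show ?thesis using dL by simp
    qed
    show "measure M (B j) \<le> (1 - q) ^ L"
      unfolding B_def by (rule block_bound[OF env sel]) (use nn s1 q q1 jL in auto)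
  qed
  finally show ?thesis by simp
qed

lemma mean_dev:
  fixes \<theta> :: "(real, 'k::{finite,linorder}) vec"
  assumes env: "bandit_env M \<theta> X U" and n: "1 \<le> n" and e: "0 < \<epsilon>"
  shows "measure M {\<omega>\<in>space M. \<epsilon> < \<bar>(\<Sum>i<n. X a i \<omega>) / real n - \<theta>$a\<bar>}
     \<le> (fact (2*k) / (2^k * fact k)) / (real n * \<epsilon>\<^sup>2)^k"
proof -
  interpret prob_space M using env by (simp add: bandit_env_def)
  have ind: "indep_vars (\<lambda>_. borel) (Fm X U) UNIV"
    using env by (simp add: bandit_env_def Fm_def)
  define I where "I = (\<lambda>i. Inl (a,i) :: ('k \<times> nat) + nat) ` {..<n}"
  have inj: "inj_on (\<lambda>i. Inl (a,i) :: ('k \<times> nat) + nat) {..<n}" by (auto simp: inj_on_def)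
  have cI: "card I = n" unfolding I_def using card_image[OF inj] by simp
  have fI: "finite I" "I \<noteq> {}" using n by (auto simp: I_def lessThan_empty_iff)
  define S where "S = (\<lambda>\<omega>. \<Sum>i<n. X a i \<omega>)"
  have SI: "S = (\<lambda>\<omega>. \<Sum>j\<in>I. Fm X U j \<omega>)"
    unfolding S_def I_def by (auto simp: sum.reindex[OF inj] Fm_def fun_eq_iff)
  have d0: "distributed M lborel (\<lambda>\<omega>. \<Sum>j\<in>I. Fm X U j \<omega>) (normal_density (\<Sum>j\<in>I. \<theta>$a) (sqrt (\<Sum>j\<in>I. 1\<^sup>2)))"
  proof (rule sum_indep_normal[OF fI])
    show "indep_vars (\<lambda>i. borel) (Fm X U) I" by (rule indep_vars_subset[OF ind]) simp
    fix j assume "j \<in> I"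
    then obtain i where j: "j = Inl (a,i)" by (auto simp: I_def)
    show "distributed M lborel (Fm X U j) (normal_density (\<theta>$a) 1)"
      using env by (simp add: bandit_env_def j Fm_def)
  qed simp
  have dS: "distributed M lborel S (normal_density (real n * \<theta>$a) (sqrt (real n)))"
    using d0 unfolding SI by (simp add: cI)
  define c where "c = real n * \<theta>$a"
  define u where "u = (\<lambda>x::real. (x - c) ^ (2*k))"
  have um: "u \<in> borel_measurable lborel" unfolding u_def by simp
  have nd0: "\<And>x. 0 \<le> normal_density c (sqrt (real n)) x" by (simp add: normal_density_nonneg)
  have intg: "integrable M (\<lambda>\<omega>. u (S \<omega>))"
    using distributed_integrable[OF dS[folded c_def] um] integrable_normal_moment[where k="2*k" and \<mu>=c and \<sigma>="sqrt (real n)"] nd0 n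
    by (simp add: u_def)
  have Eu: "(\<integral>\<omega>. u (S \<omega>) \<partial>M) = fact (2 * k) / ((2 / (sqrt (real n))\<^sup>2)^k * fact k)"
    using distributed_integral[OF dS[folded c_def] um] integral_normal_moment_even[where k=k and \<mu>=c and \<sigma>="sqrt (real n)"] nd0 n
    by (simp add: u_def)
  have Sm[measurable]: "S \<in> borel_measurable M" using dS by (auto dest: distributed_measurable)
  have pos: "0 < (real n * \<epsilon>) ^ (2*k)" using n e by simp
  have sub: "{\<omega>\<in>space M. \<epsilon> < \<bar>(\<Sum>i<n. X a i \<omega>) / real n - \<theta>$a\<bar>} \<subseteq> {\<omega>\<in>space M. (real n * \<epsilon>) ^ (2*k) \<le> u (S \<omega>)}"
  proof safe
    fix \<omega> assume w: "\<omega> \<in> space M" "\<epsilon> < \<bar>(\<Sum>i<n. X a i \<omega>) / real n - \<theta>$a\<bar>"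
    have "(\<Sum>i<n. X a i \<omega>) / real n - \<theta>$a = (S \<omega> - c) / real n" using n by (simp add: S_def c_def field_simps)
    then have "\<epsilon> < \<bar>S \<omega> - c\<bar> / real n" using w by simp
    then have "real n * \<epsilon> < \<bar>S \<omega> - c\<bar>" using n by (simp add: field_simps)
    then have "(real n * \<epsilon>) ^ (2*k) \<le> \<bar>S \<omega> - c\<bar> ^ (2*k)"
      using n e by (intro power_mono) auto
    also have "\<bar>S \<omega> - c\<bar> ^ (2*k) = u (S \<omega>)" by (simp add: u_def power_even_abs)
    finally show "(real n * \<epsilon>) ^ (2*k) \<le> u (S \<omega>)" .
  qed
  have "measure M {\<omega>\<in>space M. \<epsilon> < \<bar>(\<Sum>i<n. X a i \<omega>) / real n - \<theta>$a\<bar>}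
      \<le> measure M {\<omega>\<in>space M. (real n * \<epsilon>) ^ (2*k) \<le> u (S \<omega>)}"
    by (rule finite_measure_mono[OF sub]) (unfold u_def, measurable)
  also have "\<dots> \<le> (\<integral>\<omega>. u (S \<omega>) \<partial>M) / (real n * \<epsilon>) ^ (2*k)"
    by (rule integral_Markov_inequality_measure[OF intg, of "space M"]) (use pos in \<open>auto simp: u_def zero_le_even_power\<close>)
  also have "\<dots> = (fact (2*k) / (2^k * fact k)) / (real n * \<epsilon>\<^sup>2)^k"
  proof -
    have s2: "(sqrt (real n))\<^sup>2 = real n" by simp
    have p1: "(real n * \<epsilon>)^(2*k) = real n ^ k * (real n * \<epsilon>\<^sup>2)^k"
    proof -
      have "(real n * \<epsilon>)^(2*k) = ((real n * \<epsilon>)^2)^k" by (simp add: power_mult)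
      also have "(real n * \<epsilon>)^2 = real n * (real n * \<epsilon>\<^sup>2)" by (simp add: power2_eq_square)
      finally show ?thesis by (simp add: power_mult_distrib)
    qed
    have p2: "(2 / real n)^k = 2^k / real n ^ k" by (simp add: power_divide)
    have np: "0 < real n ^ k" "0 < (real n * \<epsilon>\<^sup>2)^k" "(0::real) < 2^k" "(0::real) < fact k" using n e by auto
    show ?thesis unfolding Eu s2 p1 p2 using np by (simp add: field_simps)
  qed
  finally show ?thesis .
qed

lemma eps_t_bounds: "1 \<le> r \<Longrightarrow> 0 < eps_t r \<and> eps_t r \<le> 1"
proof -
  assume "1 \<le> r"
  then have s: "1 \<le> sqrt (real r)" by simp
  have h: "1 \<le> 2 * sqrt (real r)" using s by linarith
  have "1 / (2 * sqrt (real r)) \<le> 1" using h by (simp only: divide_le_eq_1) auto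
  moreover have "0 < 1 / (2 * sqrt (real r))" using s by simp
  ultimately show ?thesis unfolding eps_t_def by blast
qed

lemma pic_props:
  fixes prule :: "(real, 'k::{finite,linorder}) vec \<Rightarrow> (real, 'k) vec"
  assumes fs: "fair_setting prule pic p0 K'"
  shows "0 \<le> p0" "\<And>b. 0 \<le> pic $ b" "(\<Sum>b\<in>UNIV. pic $ b) = 1"
    "\<And>v b. 0 \<le> prule v $ b"
    "\<And>v b. p0 \<le> pic $ b \<or> p0 \<le> prule v $ b \<and> prule v $ b \<le> pic $ b"
proof -
  have main: "0 \<le> p0 \<and> (\<forall>b. 0 \<le> pic $ b) \<and> (\<Sum>b\<in>UNIV. pic $ b) = 1 \<and> (\<forall>v b. 0 \<le> prule v $ b)
     \<and> (\<forall>v b. p0 \<le> pic $ b \<or> p0 \<le> prule v $ b \<and> prule v $ b \<le> pic $ b)"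
    using fs unfolding fair_setting_def
  proof (elim disjE exE conjE)
    fix p assume p01: "\<forall>a. 0 \<le> p $ a \<and> p $ a \<le> 1" and ps: "psum p \<le> 1" and pr: "prule = (\<lambda>_. p)"
      and pc: "pic = pic_pre p" and p0d: "p0 = p0_pre p" and "K' = Kprime_pre p"
    have Kpos: "0 < real CARD('k)" by simp
    show ?thesis
    proof (cases "K0 p = 0")
      case True
      then have allpos: "\<forall>b. 0 < p $ b" using p01 unfolding K0_def by (auto simp: le_less)
      have setp: "{p$a | a. p$a > 0} = range (\<lambda>a. p$a)" using allpos by auto
      have p0e: "p0 = Min (range (\<lambda>a. p$a))" using True by (simp add: p0d p0_pre_def setp)
      have p0le: "\<And>b. p0 \<le> p $ b" unfolding p0e by (rule Min_le) auto
      have p0nn: "0 \<le> p0" unfolding p0e using allpos by (subst Min_ge_iff) (auto simp: less_imp_le)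
      have pice: "\<And>b. pic $ b = p $ b + (1 - psum p) / real CARD('k)" using True by (simp add: pc pic_pre_def)
      have picge: "\<And>b. p $ b \<le> pic $ b" using ps Kpos by (simp add: pice)
      have "(\<Sum>b\<in>UNIV. pic $ b) = psum p + real CARD('k) * ((1 - psum p) / real CARD('k))"
        by (simp add: pice sum.distrib psum_def)
      also have "\<dots> = 1" using Kpos by simp
      finally show ?thesis using p0nn p0le picge p01 pr by (auto intro: order_trans)
    next
      case False
      then have K0pos: "0 < real (K0 p)" by simp
      have fin: "finite {p$a | a. p$a > 0}" by simp
      have p0a: "p0 \<le> (1 - psum p) / (2 * real (K0 p))"
        using False by (auto simp: p0d p0_pre_def)
      have p0b: "\<And>b. 0 < p $ b \<Longrightarrow> p0 \<le> p $ b"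
      proof -
        fix b assume "0 < p $ b"
        then have ne: "{a. p$a > 0} \<noteq> {}" and "Min {p$a | a. p$a > 0} \<le> p $ b" using fin by (auto intro!: Min_le)
        then show "p0 \<le> p $ b" using False by (auto simp: p0d p0_pre_def min_le_iff_disj)
      qed
      have p0nn: "0 \<le> p0"
      proof (cases "{a. p$a > 0} = {}")
        case True then show ?thesis using False ps K0pos by (simp add: p0d p0_pre_def)
      next
        case F2: False
        have "0 \<le> Min {p$a | a. p$a > 0}" using F2 fin by (subst Min_ge_iff) auto
        then show ?thesis using False F2 ps K0pos by (simp add: p0d p0_pre_def)
      qed
      have pice: "\<And>b. pic $ b = (if p$b > 0 then p$b else (1 - psum p) / real (K0 p))"
        using False by (simp add: pc pic_pre_def)
      have h1: "(1 - psum p) / (2 * real (K0 p)) \<le> (1 - psum p) / real (K0 p)"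
        using ps K0pos by (simp add: divide_simps)
      have key: "\<And>b. p0 \<le> pic $ b \<or> p0 \<le> p $ b \<and> p $ b \<le> pic $ b"
        using p0a p0b h1 by (auto simp: pice)
      have picnn: "\<And>b. 0 \<le> pic $ b" using p01 ps K0pos by (auto simp: pice)
      have "(\<Sum>b\<in>UNIV. pic $ b) = (\<Sum>b\<in>UNIV. p $ b) + (\<Sum>b\<in>{b. p$b = 0}. (1 - psum p) / real (K0 p))"
      proof -
        have "(\<Sum>b\<in>UNIV. pic $ b) = (\<Sum>b\<in>UNIV. (if p$b = 0 then (1 - psum p) / real (K0 p) else 0) + p $ b)"
          by (rule sum.cong) (use p01 in \<open>auto simp: pice less_le\<close>)
        also have "\<dots> = (\<Sum>b\<in>UNIV. p $ b) + (\<Sum>b\<in>UNIV. if p$b = 0 then (1 - psum p) / real (K0 p) else 0)"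
          by (simp add: sum.distrib)
        also have "(\<Sum>b\<in>UNIV. if p$b = 0 then (1 - psum p) / real (K0 p) else 0) = (\<Sum>b\<in>{b. p$b = 0}. (1 - psum p) / real (K0 p))"
          by (simp add: sum.If_cases)
        finally show ?thesis .
      qed
      also have "\<dots> = 1" using K0pos by (simp add: psum_def[symmetric] K0_def[symmetric])
      finally show ?thesis using p0nn key picnn p01 pr by auto
    qed
  next
    assume "continuous_on UNIV prule" and nn: "\<forall>l a. 0 \<le> prule l $ a \<and> prule l $ a \<le> 1"
      and "\<forall>l. psum (prule l) \<le> 1" and pc: "pic = (\<chi> a. 1 / real CARD('k))"
      and p0d: "p0 = 1 / (2 * real CARD('k))" and "K' = CARD('k)"
    have Kpos: "0 < real CARD('k)" by simp
    have "p0 \<le> 1 / real CARD('k)" using Kpos by (simp add: p0d field_simps)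
    then show ?thesis using nn Kpos by (simp add: pc p0d)
  qed
  then show "0 \<le> p0" "\<And>b. 0 \<le> pic $ b" "(\<Sum>b\<in>UNIV. pic $ b) = 1"
    "\<And>v b. 0 \<le> prule v $ b"
    "\<And>v b. p0 \<le> pic $ b \<or> p0 \<le> prule v $ b \<and> prule v $ b \<le> pic $ b" by blast+
qed

lemma pi_props:
  fixes prule :: "(real, 'k::{finite,linorder}) vec \<Rightarrow> (real, 'k) vec"
  assumes fs: "fair_setting prule pic p0 K'" and ws: "wstar_selection prule sel" and r: "1 \<le> r"
  shows "\<And>b. 0 \<le> ftas_pi sel pic r v $ b" "(\<Sum>b\<in>UNIV. ftas_pi sel pic r v $ b) \<le> 1"
    "p0 * eps_t r \<le> ftas_pi sel pic r v $ a"
proof -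
  note pp = pic_props[OF fs]
  have sv: "\<And>b. prule v $ b \<le> sel v $ b" "(\<Sum>b\<in>UNIV. sel v $ b) = 1"
    using ws unfolding wstar_selection_def Sigma_p_def by auto
  note e = eps_t_bounds[OF r]
  have svnn: "\<And>b. 0 \<le> sel v $ b" using sv pp(4) order_trans by blast
  show "\<And>b. 0 \<le> ftas_pi sel pic r v $ b"
    unfolding ftas_pi_def using e svnn pp(2) by simp
  have "(\<Sum>b\<in>UNIV. ftas_pi sel pic r v $ b) = (1 - eps_t r) * (\<Sum>b\<in>UNIV. sel v $ b) + eps_t r * (\<Sum>b\<in>UNIV. pic $ b)"
    unfolding ftas_pi_def by (simp add: sum.distrib sum_distrib_left)
  also have "\<dots> = 1" using sv pp(3) by simp
  finally show "(\<Sum>b\<in>UNIV. ftas_pi sel pic r v $ b) \<le> 1" by simp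
  have fp: "ftas_pi sel pic r v $ a = (1 - eps_t r) * sel v $ a + eps_t r * pic $ a"
    unfolding ftas_pi_def by simp
  show "p0 * eps_t r \<le> ftas_pi sel pic r v $ a"
    using pp(5)[of a v]
  proof
    assume "p0 \<le> pic $ a"
    then have "p0 * eps_t r \<le> eps_t r * pic $ a" using e by (simp add: mult.commute mult_left_mono)
    moreover have "0 \<le> (1 - eps_t r) * sel v $ a" using e svnn by simp
    ultimately show ?thesis unfolding fp by linarith
  next
    assume h: "p0 \<le> prule v $ a \<and> prule v $ a \<le> pic $ a"
    then have "p0 \<le> (1 - eps_t r) * sel v $ a + eps_t r * pic $ a"
    proof -
      have "(1 - eps_t r) * prule v $ a \<le> (1 - eps_t r) * sel v $ a" using e sv by (intro mult_left_mono) auto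
      moreover have "eps_t r * prule v $ a \<le> eps_t r * pic $ a" using e h by (intro mult_left_mono) auto
      ultimately show ?thesis using h by (simp add: algebra_simps)
    qed
    moreover have "p0 * eps_t r \<le> p0" using e pp(1) by (simp add: mult_left_le)
    ultimately show ?thesis unfolding fp by linarith
  qed
qed

lemma d_facts:
  fixes T :: nat
  assumes T: "1 \<le> T"
  defines "d \<equiv> nat \<lfloor>real T powr (1/16)\<rfloor>" and "t0 \<equiv> nat \<lceil>real T powr (1/4)\<rceil>"
  shows "1 \<le> d" "d^4 \<le> t0" "t0 \<le> (d+1)^4" "real T < (real d + 1) ^ 16" "real d \<le> real T powr (1/16)"
proof -
  have T1: "1 \<le> real T" using T by simp
  have r1: "1 \<le> real T powr (1/16)" using T1 by (simp add: ge_one_powr_ge_zero)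
  have dle: "real d \<le> real T powr (1/16)" unfolding d_def using r1 by simp
  have dgt: "real T powr (1/16) < real d + 1" unfolding d_def using r1 by linarith
  show "1 \<le> d" unfolding d_def using r1 by (simp add: le_nat_floor)
  show "real d \<le> real T powr (1/16)" by (fact dle)
  have e4: "(real T powr (1/16)) ^ 4 = real T powr (1/4)"
    using T1 by (simp add: powr_realpow[symmetric] powr_powr)
  have e16: "(real T powr (1/16)) ^ 16 = real T"
    using T1 by (simp add: powr_realpow[symmetric] powr_powr)
  have "real (d^4) \<le> real T powr (1/4)" unfolding e4[symmetric] of_nat_power
    using dle by (intro power_mono) auto
  then have "real (d^4) \<le> real_of_int \<lceil>real T powr (1/4)\<rceil>"
    using le_of_int_ceiling order_trans by blast
  then have "int (d^4) \<le> \<lceil>real T powr (1/4)\<rceil>" by (metis of_int_le_iff of_int_of_nat_eq)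
  then show "d^4 \<le> t0" unfolding t0_def by linarith
  have "real T powr (1/4) < (real d + 1)^4" unfolding e4[symmetric]
    using dgt r1 by (intro power_strict_mono) auto
  then have "\<lceil>real T powr (1/4)\<rceil> \<le> int ((d+1)^4)" by (simp add: ceiling_le_iff add.commute)
  then show "t0 \<le> (d+1)^4" unfolding t0_def by (simp only: nat_le_iff)
  have "(real T powr (1/16)) ^ 16 < (real d + 1)^16"
    using dgt r1 by (intro power_strict_mono) auto
  then show "real T < (real d + 1) ^ 16" using e16 by simp
qed

lemma fixedT_bound:
  fixes \<theta> :: "(real, 'k::{finite,linorder}) vec"
    and prule :: "(real, 'k) vec \<Rightarrow> (real, 'k) vec" and pic :: "(real, 'k) vec"
    and M :: "'w measure" and T :: nat
  assumes env: "bandit_env M \<theta> X U" and ws: "wstar_selection prule sel"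
    and sel: "sel \<in> borel_measurable borel"
    and fs: "fair_setting prule pic p0 K'" and e: "0 < \<epsilon>" and T: "1 \<le> T"
  defines "d \<equiv> nat \<lfloor>real T powr (1/16)\<rfloor>"
  shows "measure M {\<omega> \<in> space M. \<not> (\<forall>t\<in>{nat \<lceil>real T powr (1/4)\<rceil>..T}.
                     sup_norm (ftas_emp sel pic dflt X U \<omega> t - \<theta>) \<le> \<epsilon>)}
     \<le> real CARD('k) * (real d * (1 - p0 / (2 * (real d + 1)^2)) ^ (d^3)
           + real T * ((fact (2*k) / (2^k * fact k)) / (real d * \<epsilon>\<^sup>2)^k))"
proof -
  interpret prob_space M using env by (simp add: bandit_env_def)
  define t0 where "t0 = nat \<lceil>real T powr (1/4)\<rceil>"
  define q where "q = p0 / (2 * (real d + 1)^2)"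
  define C where "C = fact (2*k) / (2^k * fact k :: real)"
  note df = d_facts[OF T, folded d_def t0_def]
  note pp = pic_props[OF fs]
  have d1: "1 \<le> d" by (rule df(1))
  have q_le: "\<And>r v a. 1 \<le> r \<Longrightarrow> r \<le> t0 \<Longrightarrow> q \<le> ftas_pi sel pic r v $ a"
  proof -
    fix r v a assume r: "1 \<le> r" "r \<le> t0"
    have "sqrt (real r) \<le> sqrt (real t0)" using r by simp
    also have "real t0 \<le> (real d + 1)^4" using df(3) by (metis of_nat_1 of_nat_add of_nat_le_iff of_nat_power)
    then have "sqrt (real t0) \<le> sqrt ((real d + 1)^4)" by simp
    also have "sqrt ((real d + 1)^4) = (real d + 1)^2"
    proof -
      have "(real d + 1)^4 = ((real d + 1)^2)\<^sup>2" by (simp add: power_mult[symmetric])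
      then show ?thesis by (simp only: real_sqrt_abs) simp
    qed
    finally have sq: "sqrt (real r) \<le> (real d + 1)^2" .
    have sr: "0 < sqrt (real r)" using r by simp
    have "1 / (2 * (real d + 1)^2) \<le> eps_t r" unfolding eps_t_def
      using sq sr by (intro divide_left_mono mult_left_mono) auto
    then have "p0 * (1 / (2 * (real d + 1)^2)) \<le> p0 * eps_t r" using pp(1) by (intro mult_left_mono) auto
    also have "\<dots> \<le> ftas_pi sel pic r v $ a" by (rule pi_props(3)[OF fs ws r(1)])
    finally show "q \<le> ftas_pi sel pic r v $ a" by (simp add: q_def)
  qed
  have q1: "q \<le> 1"
  proof -
    obtain b :: 'k where True by simp
    have "1 \<le> d^4" using d1 by simp
    then have t01: "1 \<le> t0" using df(2) by linarith
    have "q \<le> ftas_pi sel pic 1 0 $ b" using q_le[of 1 0 b] t01 by simp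
    also have "\<dots> \<le> (\<Sum>c\<in>UNIV. ftas_pi sel pic 1 0 $ c)"
      by (rule member_le_sum) (use pi_props(1)[OF fs ws] in auto)
    also have "\<dots> \<le> 1" by (rule pi_props(2)[OF fs ws]) simp
    finally show ?thesis .
  qed
  define A1 where "A1 = (\<lambda>a. {\<omega>\<in>space M. Nc sel pic dflt X U t0 \<omega> a < d})"
  define A2 where "A2 = (\<lambda>a n. {\<omega>\<in>space M. \<epsilon> < \<bar>(\<Sum>i<n. X a i \<omega>) / real n - \<theta>$a\<bar>})"
  have A1m: "A1 a \<in> sets M" for a unfolding A1_def
    using Nc_set_measurable[OF env sel, where P="\<lambda>x y. x a < d" and t=t0 and s=t0 and pic=pic and dflt=dflt] by simp
  have Xm[measurable]: "\<And>a i. X a i \<in> borel_measurable M"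
    using env unfolding bandit_env_def distributed_def by auto
  have A2m: "\<And>a n. A2 a n \<in> sets M" unfolding A2_def by measurable
  have sub: "{\<omega> \<in> space M. \<not> (\<forall>t\<in>{t0..T}. sup_norm (ftas_emp sel pic dflt X U \<omega> t - \<theta>) \<le> \<epsilon>)}
      \<subseteq> (\<Union>a. A1 a \<union> (\<Union>n\<in>{d..T}. A2 a n))"
  proof
    fix \<omega> assume "\<omega> \<in> {\<omega> \<in> space M. \<not> (\<forall>t\<in>{t0..T}. sup_norm (ftas_emp sel pic dflt X U \<omega> t - \<theta>) \<le> \<epsilon>)}"
    then obtain t where w: "\<omega> \<in> space M" and t: "t0 \<le> t" "t \<le> T"
      and big: "\<epsilon> < sup_norm (ftas_emp sel pic dflt X U \<omega> t - \<theta>)" by auto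
    obtain a where a: "\<epsilon> < \<bar>(ftas_emp sel pic dflt X U \<omega> t - \<theta>) $ a\<bar>"
    proof -
      have "Max (range (\<lambda>a. \<bar>(ftas_emp sel pic dflt X U \<omega> t - \<theta>) $ a\<bar>)) \<in> range (\<lambda>a. \<bar>(ftas_emp sel pic dflt X U \<omega> t - \<theta>) $ a\<bar>)"
        by (rule Max_in) auto
      then obtain a0 where "Max (range (\<lambda>a. \<bar>(ftas_emp sel pic dflt X U \<omega> t - \<theta>) $ a\<bar>)) = \<bar>(ftas_emp sel pic dflt X U \<omega> t - \<theta>) $ a0\<bar>"
        by blast
      then show ?thesis using that[of a0] big unfolding sup_norm_def by simp
    qed
    show "\<omega> \<in> (\<Union>a. A1 a \<union> (\<Union>n\<in>{d..T}. A2 a n))"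
    proof (cases "Nc sel pic dflt X U t0 \<omega> a < d")
      case True then show ?thesis using w by (auto simp: A1_def)
    next
      case False
      define n where "n = Nc sel pic dflt X U t \<omega> a"
      have "Nc sel pic dflt X U t0 \<omega> a \<le> n" unfolding n_def Nc_def by (rule ftas_counts_mono[OF t(1)])
      then have nd: "d \<le> n" using False by simp
      have nT: "n \<le> T" unfolding n_def Nc_def using ftas_counts_le t(2) order_trans by blast
      have "ftas_emp sel pic dflt X U \<omega> t $ a = (\<Sum>i<n. X a i \<omega>) / real n"
        using nd d1 by (simp add: ftas_emp_def emp_mean_def n_def Nc_def)
      then have "\<omega> \<in> A2 a n" using a w by (simp add: A2_def)
      then have "\<omega> \<in> A1 a \<union> (\<Union>n\<in>{d..T}. A2 a n)" using nd nT by auto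
      then show ?thesis by (rule UN_I[OF UNIV_I])
    qed
  qed
  have "measure M {\<omega> \<in> space M. \<not> (\<forall>t\<in>{t0..T}. sup_norm (ftas_emp sel pic dflt X U \<omega> t - \<theta>) \<le> \<epsilon>)}
      \<le> measure M (\<Union>a. A1 a \<union> (\<Union>n\<in>{d..T}. A2 a n))"
    by (rule finite_measure_mono[OF sub]) (use A1m A2m in auto)
  also have "\<dots> \<le> (\<Sum>a\<in>UNIV. measure M (A1 a \<union> (\<Union>n\<in>{d..T}. A2 a n)))"
    by (rule finite_measure_subadditive_finite) (use A1m A2m in auto)
  also have "\<dots> \<le> (\<Sum>a\<in>(UNIV::'k set). real d * (1 - q) ^ (d^3) + real T * (C / (real d * \<epsilon>\<^sup>2)^k))"
  proof (rule sum_mono)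
    fix a :: 'k
    have m0: "measure M (A1 a \<union> (\<Union>n\<in>{d..T}. A2 a n)) \<le> measure M (A1 a) + measure M (\<Union>n\<in>{d..T}. A2 a n)"
      by (rule measure_Un_le) (use A1m A2m in auto)
    have dL: "d * d^3 \<le> t0" using df(2) by (simp add: power_numeral_reduce)
    have nn_r: "\<And>r v b. 1 \<le> r \<Longrightarrow> r \<le> t0 \<Longrightarrow> 0 \<le> ftas_pi sel pic r v $ b"
      by (rule pi_props(1)[OF fs ws])
    have s1_r: "\<And>r v. 1 \<le> r \<Longrightarrow> r \<le> t0 \<Longrightarrow> (\<Sum>b\<in>UNIV. ftas_pi sel pic r v $ b) \<le> 1"
      by (rule pi_props(2)[OF fs ws])
    have m1: "measure M (A1 a) \<le> real d * (1 - q) ^ (d^3)" unfolding A1_def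
      by (rule count_bound[OF env sel nn_r s1_r q_le q1 dL])
    have "measure M (\<Union>n\<in>{d..T}. A2 a n) \<le> (\<Sum>n\<in>{d..T}. measure M (A2 a n))"
      by (rule finite_measure_subadditive_finite) (use A2m in auto)
    also have "\<dots> \<le> (\<Sum>n\<in>{d..T}. C / (real d * \<epsilon>\<^sup>2)^k)"
    proof (rule sum_mono)
      fix n assume n: "n \<in> {d..T}"
      have "measure M (A2 a n) \<le> C / (real n * \<epsilon>\<^sup>2)^k" unfolding A2_def C_def
        by (rule mean_dev[OF env _ e]) (use n d1 in auto)
      also have "\<dots> \<le> C / (real d * \<epsilon>\<^sup>2)^k"
        unfolding C_def using n d1 e by (intro divide_left_mono power_mono mult_right_mono mult_pos_pos) auto
      finally show "measure M (A2 a n) \<le> C / (real d * \<epsilon>\<^sup>2)^k" .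
    qed
    also have "\<dots> \<le> real T * (C / (real d * \<epsilon>\<^sup>2)^k)"
    proof -
      have cl: "real (card {d..T}) \<le> real T" using d1 by simp
      have c0: "0 \<le> C / (real d * \<epsilon>\<^sup>2)^k" unfolding C_def using e by simp
      have "(\<Sum>n\<in>{d..T}. C / (real d * \<epsilon>\<^sup>2)^k) = real (card {d..T}) * (C / (real d * \<epsilon>\<^sup>2)^k)"
        by (simp only: sum_constant)
      then show ?thesis using mult_right_mono[OF cl c0] by simp
    qed
    finally have m2: "measure M (\<Union>n\<in>{d..T}. A2 a n) \<le> real T * (C / (real d * \<epsilon>\<^sup>2)^k)" .
    show "measure M (A1 a \<union> (\<Union>n\<in>{d..T}. A2 a n)) \<le> real d * (1 - q) ^ (d^3) + real T * (C / (real d * \<epsilon>\<^sup>2)^k)"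
      using m0 m1 m2 by linarith
  qed
  finally show ?thesis by (simp add: t0_def q_def C_def)
qed

lemma exp_lower_pow:
  fixes z :: real assumes z: "0 \<le> z" and n: "0 < n"
  shows "(z / real n) ^ n \<le> exp z"
proof -
  have "z / real n \<le> 1 + z / real n" by simp
  also have "\<dots> \<le> exp (z / real n)" by (rule exp_ge_add_one_self)
  finally have "(z / real n) ^ n \<le> exp (z / real n) ^ n" using z n by (intro power_mono) auto
  also have "\<dots> = exp (real n * (z / real n))" by (rule exp_of_nat_mult[symmetric])
  also have "\<dots> = exp z" using n by simp
  finally show ?thesis .
qed

lemma poly_exp_bound:
  fixes x c :: real assumes x: "1 \<le> x" and c: "0 < c"
  shows "x ^ m * exp (- (c * x)) \<le> (real (Suc m) / c) ^ Suc m / x"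
proof -
  have cx: "0 < c * x" using x c by simp
  have le: "(c * x / real (Suc m)) ^ Suc m \<le> exp (c * x)"
    by (rule exp_lower_pow) (use cx in auto)
  have pos: "0 < (c * x / real (Suc m)) ^ Suc m" using cx by simp
  have pp: "0 < exp (c * x) * (c * x / real (Suc m)) ^ Suc m" using pos exp_gt_zero by (rule mult_pos_pos[rotated])
  have "x ^ m / exp (c * x) \<le> x ^ m / (c * x / real (Suc m)) ^ Suc m"
    by (rule divide_left_mono[OF le _ pp]) (use x in simp)
  moreover have "x ^ m * exp (- (c * x)) = x ^ m / exp (c * x)" by (simp add: exp_minus divide_inverse)
  ultimately have "x ^ m * exp (- (c * x)) \<le> x ^ m / (c * x / real (Suc m)) ^ Suc m" by simp
  also have "\<dots> = (real (Suc m) / c) ^ Suc m / x"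
    using x c by (simp add: field_simps power_mult_distrib power_divide del: of_nat_Suc)
  finally show ?thesis .
qed

lemma term1_bound:
  fixes p0 :: real and d :: nat
  assumes p: "0 < p0" "p0 \<le> 1" and d: "1 \<le> d"
  shows "(1 - p0 / (2 * (real d + 1)^2)) ^ (d^3) \<le> exp (- ((p0 / 8) * real d))"
proof -
  define q where "q = p0 / (2 * (real d + 1)^2)"
  have x1: "1 \<le> real d" using d by simp
  have qpos: "0 \<le> q" using p by (simp add: q_def)
  have "2 * (real d + 1)^2 \<ge> 8" using x1
  proof -
    have "(real d + 1)^2 \<ge> 2^2" using x1 by (intro power_mono) auto
    then show ?thesis by simp
  qed
  then have q1: "q \<le> 1" using p unfolding q_def by (simp add: divide_le_eq)
  have "(1 - q) ^ (d^3) \<le> exp (- q) ^ (d^3)"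
    using q1 by (intro power_mono) (auto simp: exp_ge_add_one_self[of "-q", simplified])
  also have "\<dots> = exp (- (q * real (d^3)))" by (simp add: exp_of_nat_mult[symmetric] mult.commute)
  also have "\<dots> \<le> exp (- ((p0 / 8) * real d))"
  proof -
    have "(real d + 1)^2 \<le> (2 * real d)^2" using x1 by (intro power_mono) auto
    then have h: "2 * (real d + 1)^2 \<le> 8 * (real d)^2" by (simp add: power_mult_distrib)
    have "(p0 / 8) * real d = p0 * (real d)^3 / (8 * (real d)^2)" using x1 by (simp add: power2_eq_square power3_eq_cube)
    also have "\<dots> \<le> p0 * (real d)^3 / (2 * (real d + 1)^2)"
      using h p x1 by (intro divide_left_mono) auto
    also have "\<dots> = q * real (d^3)" by (simp add: q_def)
    finally show ?thesis by simp
  qed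
  finally show ?thesis by (simp add: q_def)
qed

lemma pow_powr_inv:
  fixes y :: real assumes "0 \<le> y"
  shows "(y ^ 16) powr (1/16) = y"
proof (cases "y = 0")
  case True then show ?thesis by simp
next
  case False
  then have "0 < y" using assms by simp
  then have "y ^ 16 = y powr (real 16)" by (subst powr_realpow) auto
  then have "(y ^ 16) powr (1/16) = y powr (real 16 * (1/16))" by (simp only: powr_powr)
  also have "\<dots> = y" using \<open>0 < y\<close> by simp
  finally show ?thesis .
qed

lemma asym_bound:
  fixes p0 \<epsilon> \<alpha> Kc :: real
  assumes p0: "0 < p0" "p0 \<le> 1" and e: "0 < \<epsilon>" and al: "0 < \<alpha>" and Kc: "0 < Kc"
  defines "k \<equiv> nat \<lceil>16 * \<alpha>\<rceil> + 18"
  shows "\<exists>T0. \<forall>T::nat. T0 \<le> T \<longrightarrow> 1 \<le> T \<longrightarrow>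
    Kc * (real (nat \<lfloor>real T powr (1/16)\<rfloor>) * (1 - p0 / (2 * (real (nat \<lfloor>real T powr (1/16)\<rfloor>) + 1)^2)) ^ ((nat \<lfloor>real T powr (1/16)\<rfloor>)^3)
           + real T * ((fact (2*k) / (2^k * fact k)) / (real (nat \<lfloor>real T powr (1/16)\<rfloor>) * \<epsilon>\<^sup>2)^k))
    \<le> 1 / real T powr \<alpha>"
proof -
  define j where "j = nat \<lceil>16 * \<alpha>\<rceil>"
  have kj: "k = j + 18" by (simp add: k_def j_def)
  define c where "c = p0 / 8"
  have c: "0 < c" using p0 by (simp add: c_def)
  define C :: real where "C = fact (2*k) / (2^k * fact k)"
  have C: "0 \<le> C" by (simp add: C_def)
  define A1 where "A1 = Kc * 2^j * (real (Suc (Suc j)) / c) ^ Suc (Suc j)"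
  define A2 where "A2 = Kc * C * 2^(j+16) / (\<epsilon>\<^sup>2)^k"
  have A1: "0 \<le> A1" using Kc c by (simp add: A1_def)
  have A2: "0 \<le> A2" using Kc C by (simp add: A2_def)
  define T0 where "T0 = nat \<lceil>(A1 + A2 + 2) ^ 16\<rceil>"
  show ?thesis
  proof (intro exI[of _ T0] allI impI)
    fix T :: nat assume T0: "T0 \<le> T" and T: "1 \<le> T"
    define d where "d = nat \<lfloor>real T powr (1/16)\<rfloor>"
    define x where "x = real d"
    note df = d_facts[OF T, folded d_def]
    have x1: "1 \<le> x" using df(1) by (simp add: x_def)
    have TT: "real T < (x + 1)^16" using df(4) by (simp add: x_def)
    have Tx: "real T \<le> (2 * x)^16"
    proof -
      have "(x + 1)^16 \<le> (2 * x)^16" using x1 by (intro power_mono) auto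
      then show ?thesis using TT by simp
    qed
    have xA: "A1 + A2 \<le> x"
    proof -
      have "(A1 + A2 + 2) ^ 16 \<le> real T0" unfolding T0_def by (simp add: real_nat_ceiling_ge)
      also have "\<dots> \<le> real T" using T0 by simp
      finally have h: "(A1 + A2 + 2) ^ 16 \<le> real T" .
      have "A1 + A2 + 2 = ((A1 + A2 + 2) ^ 16) powr (1/16)"
        using A1 A2 by (intro pow_powr_inv[symmetric]) simp
      also have "\<dots> \<le> real T powr (1/16)" using h A1 A2 by (intro powr_mono2) auto
      finally have "A1 + A2 + 2 \<le> real T powr (1/16)" .
      moreover have "real T powr (1/16) < x + 1" using TT df(5)
        unfolding x_def d_def by linarith
      ultimately show ?thesis by linarith
    qed
    define P where "P = (2 * x) ^ j"
    have Ppos: "0 < P" using x1 by (simp add: P_def)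
    have TP: "real T powr \<alpha> \<le> P"
    proof -
      have "real T powr \<alpha> \<le> ((2 * x)^16) powr \<alpha>" using Tx al T by (intro powr_mono2) auto
      also have "\<dots> = (2 * x) powr (16 * \<alpha>)"
      proof -
        have "(2 * x)^16 = (2 * x) powr (real 16)" using x1 by (subst powr_realpow) auto
        then have "((2 * x)^16) powr \<alpha> = (2 * x) powr (real 16 * \<alpha>)" by (simp only: powr_powr)
        then show ?thesis by simp
      qed
      also have "\<dots> \<le> (2 * x) powr (real j)" using x1 real_nat_ceiling_ge[of "16 * \<alpha>"] by (intro powr_mono) (auto simp: j_def)
      also have "\<dots> = P" using x1 by (simp add: P_def powr_realpow)
      finally show ?thesis .
    qed
    have t1: "Kc * (x * (1 - p0 / (2 * (x + 1)^2)) ^ (d^3)) * P \<le> A1 / x"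
    proof -
      have "(1 - p0 / (2 * (x + 1)^2)) ^ (d^3) \<le> exp (- (c * x))"
        using term1_bound[OF p0 df(1)] by (simp add: x_def c_def)
      then have "Kc * (x * (1 - p0 / (2 * (x + 1)^2)) ^ (d^3)) * P \<le> Kc * (x * exp (- (c * x))) * P"
        using Kc Ppos x1 by (intro mult_right_mono mult_left_mono) auto
      also have "\<dots> = Kc * 2^j * (x ^ Suc j * exp (- (c * x)))"
        by (simp add: P_def power_mult_distrib)
      also have "\<dots> \<le> Kc * 2^j * ((real (Suc (Suc j)) / c) ^ Suc (Suc j) / x)"
        using Kc by (intro mult_left_mono poly_exp_bound[OF x1 c]) auto
      also have "\<dots> = A1 / x" by (simp add: A1_def)
      finally show ?thesis .
    qed
    have t2: "Kc * (real T * (C / (x * \<epsilon>\<^sup>2)^k)) * P \<le> A2 / x"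
    proof -
      have "Kc * (real T * (C / (x * \<epsilon>\<^sup>2)^k)) * P \<le> Kc * ((2 * x)^16 * (C / (x * \<epsilon>\<^sup>2)^k)) * P"
        using Kc Ppos C x1 e Tx by (intro mult_right_mono mult_left_mono) auto
      also have "\<dots> = Kc * C * 2^(j+16) / (\<epsilon>\<^sup>2)^k * (x^(j+16) / x^(j+18))"
      proof -
        have e1: "(2*x)^16 * P = 2^(j+16) * x^(j+16)" by (simp add: P_def power_mult_distrib power_add)
        have e2: "(x*\<epsilon>\<^sup>2)^k = x^(j+18) * (\<epsilon>\<^sup>2)^k" by (simp add: kj power_mult_distrib)
        have "Kc * ((2 * x)^16 * (C / (x * \<epsilon>\<^sup>2)^k)) * P = Kc * C * ((2*x)^16 * P) / (x*\<epsilon>\<^sup>2)^k"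
          by (simp add: mult_ac)
        also have "\<dots> = Kc * C * (2^(j+16) * x^(j+16)) / (x^(j+18) * (\<epsilon>\<^sup>2)^k)" by (simp only: e1 e2)
        also have "\<dots> = Kc * C * 2^(j+16) / (\<epsilon>\<^sup>2)^k * (x^(j+16) / x^(j+18))"
          by (simp add: mult_ac)
        finally show ?thesis .
      qed
      also have "x^(j+16) / x^(j+18) = 1 / x^2" using x1 by (simp add: power_add field_simps)
      also have "1 / x^2 \<le> 1 / x" using x1 by (simp add: field_simps power2_eq_square)
      then have "Kc * C * 2^(j+16) / (\<epsilon>\<^sup>2)^k * (1 / x^2) \<le> Kc * C * 2^(j+16) / (\<epsilon>\<^sup>2)^k * (1 / x)"
        using A2 unfolding A2_def by (intro mult_left_mono) auto
      also have "\<dots> = A2 / x" by (simp add: A2_def)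
      finally show ?thesis .
    qed
    have "Kc * (x * (1 - p0 / (2 * (x + 1)^2)) ^ (d^3) + real T * (C / (x * \<epsilon>\<^sup>2)^k)) * P \<le> (A1 + A2) / x"
      using t1 t2 by (simp add: distrib_left distrib_right add_divide_distrib)
    also have "\<dots> \<le> 1" using xA x1 by simp
    finally have "Kc * (x * (1 - p0 / (2 * (x + 1)^2)) ^ (d^3) + real T * (C / (x * \<epsilon>\<^sup>2)^k)) \<le> 1 / P"
      using Ppos by (simp add: field_simps)
    also have "1 / P \<le> 1 / real T powr \<alpha>" using TP T Ppos by (intro divide_left_mono) (auto intro!: mult_pos_pos)
    finally show "Kc * (real (nat \<lfloor>real T powr (1/16)\<rfloor>) * (1 - p0 / (2 * (real (nat \<lfloor>real T powr (1/16)\<rfloor>) + 1)^2)) ^ ((nat \<lfloor>real T powr (1/16)\<rfloor>)^3)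
           + real T * ((fact (2*k) / (2^k * fact k)) / (real (nat \<lfloor>real T powr (1/16)\<rfloor>) * \<epsilon>\<^sup>2)^k))
      \<le> 1 / real T powr \<alpha>"
      by (simp only: x_def d_def C_def)
  qed
qed

lemma p0_le_1:
  fixes prule :: "(real, 'k::{finite,linorder}) vec \<Rightarrow> (real, 'k) vec"
  assumes fs: "fair_setting prule pic p0 K'"
  shows "p0 \<le> 1"
proof -
  note pp = pic_props[OF fs]
  obtain b :: 'k where True by simp
  have pb: "pic $ b \<le> 1"
  proof -
    have "pic $ b \<le> (\<Sum>c\<in>UNIV. pic $ c)" by (rule member_le_sum) (use pp(2) in auto)
    then show ?thesis using pp(3) by simp
  qed
  from pp(5)[of b 0] show ?thesis using pb by linarith
qed

theorem propositionC4:
  fixes \<theta> :: "(real, 'k::{finite,linorder}) vec"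
    and prule :: "(real, 'k) vec \<Rightarrow> (real, 'k) vec" and pic :: "(real, 'k) vec"
    and p0 :: real and K' :: nat and \<alpha> \<epsilon> :: real
  assumes "unique_best \<theta>"
    and "fair_setting prule pic p0 K'"
    and "\<alpha> > 0" and "\<epsilon> > 0"
  shows "\<exists>B>0. \<forall>(M :: 'w measure) X U sel dflt.
           bandit_env M \<theta> X U \<and> wstar_selection prule sel \<and> sel \<in> borel_measurable borel
           \<longrightarrow> (\<forall>T::nat. T \<ge> 1 \<longrightarrow>
                 measure M {\<omega> \<in> space M. \<not> (\<forall>t\<in>{nat \<lceil>real T powr (1/4)\<rceil>..T}.
                     sup_norm (ftas_emp sel pic dflt X U \<omega> t - \<theta>) \<le> \<epsilon>)}
                 \<le> 1 / real T powr \<alpha>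
                   + 2 * B * real CARD('k) * real T
                     * exp (- 2 * real_of_int \<lfloor>p0 powr (1/4) * real T powr (1/16)
                                  / sqrt (ln (1 + real K' * real T powr \<alpha>))\<rfloor> * \<epsilon>\<^sup>2))"
proof -
  note fs = assms(2) and al = assms(3) and e = assms(4)
  note pp = pic_props[OF fs]
  define Kc where "Kc = real CARD('k)"
  have Kc: "0 < Kc" by (simp add: Kc_def)
  define E where "E = (\<lambda>T::nat. exp (- 2 * real_of_int \<lfloor>p0 powr (1/4) * real T powr (1/16)
                                  / sqrt (ln (1 + real K' * real T powr \<alpha>))\<rfloor> * \<epsilon>\<^sup>2))"
  have Epos: "\<And>T. 0 < E T" by (simp add: E_def)
  have pr1: "measure M S \<le> 1" if "bandit_env M \<theta> X U" for M :: "'w measure" and X U S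
  proof -
    interpret prob_space M using that by (simp add: bandit_env_def)
    show ?thesis by simp
  qed
  have pw0: "0 \<le> 1 / real T powr \<alpha>" for T :: nat by simp
  show ?thesis
  proof (cases "p0 = 0")
    case True
    show ?thesis
    proof (intro exI[of _ 1] conjI allI impI)
      fix M :: "'w measure" and X U sel dflt and T :: nat
      assume H: "bandit_env M \<theta> X U \<and> wstar_selection prule sel \<and> sel \<in> borel_measurable borel"
        and T: "1 \<le> T"
      have "E T = 1" by (simp add: E_def True)
      have c1: "1 \<le> real CARD('k)" by simp
      have t1: "1 \<le> real T" using T by simp
      have "1 \<le> real CARD('k) * real T" using mult_mono[OF c1 t1] by simp
      then have "1 \<le> 2 * 1 * real CARD('k) * real T * E T" using \<open>E T = 1\<close> by simp
      moreover have "measure M {\<omega> \<in> space M. \<not> (\<forall>t\<in>{nat \<lceil>real T powr (1/4)\<rceil>..T}.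
                     sup_norm (ftas_emp sel pic dflt X U \<omega> t - \<theta>) \<le> \<epsilon>)} \<le> 1"
        using pr1 H by blast
      ultimately show "measure M {\<omega> \<in> space M. \<not> (\<forall>t\<in>{nat \<lceil>real T powr (1/4)\<rceil>..T}.
                     sup_norm (ftas_emp sel pic dflt X U \<omega> t - \<theta>) \<le> \<epsilon>)}
                 \<le> 1 / real T powr \<alpha> + 2 * 1 * real CARD('k) * real T * exp (- 2 * real_of_int \<lfloor>p0 powr (1/4) * real T powr (1/16)
                                  / sqrt (ln (1 + real K' * real T powr \<alpha>))\<rfloor> * \<epsilon>\<^sup>2)"
        using pw0[of T] unfolding E_def by linarith
    qed simp
  next
    case False
    then have p0: "0 < p0" using pp(1) by simp
    define k where "k = nat \<lceil>16 * \<alpha>\<rceil> + 18"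
    obtain T0 where T0: "\<And>T::nat. T0 \<le> T \<Longrightarrow> 1 \<le> T \<Longrightarrow>
      Kc * (real (nat \<lfloor>real T powr (1/16)\<rfloor>) * (1 - p0 / (2 * (real (nat \<lfloor>real T powr (1/16)\<rfloor>) + 1)^2)) ^ ((nat \<lfloor>real T powr (1/16)\<rfloor>)^3)
           + real T * ((fact (2*k) / (2^k * fact k)) / (real (nat \<lfloor>real T powr (1/16)\<rfloor>) * \<epsilon>\<^sup>2)^k))
      \<le> 1 / real T powr \<alpha>"
      using asym_bound[OF p0 p0_le_1[OF fs] e al Kc] unfolding k_def by blast
    define B where "B = 1 + (\<Sum>T\<in>{1..<T0}. 1 / (2 * Kc * real T * E T))"
    have sum0: "0 \<le> (\<Sum>T\<in>{1..<T0}. 1 / (2 * Kc * real T * E T))"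
      using Kc Epos by (intro sum_nonneg) (auto intro!: divide_nonneg_nonneg mult_nonneg_nonneg less_imp_le)
    have Bpos: "0 < B" using sum0 by (simp add: B_def)
    show ?thesis
    proof (intro exI[of _ B] conjI allI impI)
      show "0 < B" by (fact Bpos)
      fix M :: "'w measure" and X U sel dflt and T :: nat
      assume H: "bandit_env M \<theta> X U \<and> wstar_selection prule sel \<and> sel \<in> borel_measurable borel"
        and T: "1 \<le> T"
      have env: "bandit_env M \<theta> X U" and ws: "wstar_selection prule sel" and sel: "sel \<in> borel_measurable borel"
        using H by auto
      define P where "P = measure M {\<omega> \<in> space M. \<not> (\<forall>t\<in>{nat \<lceil>real T powr (1/4)\<rceil>..T}.
                     sup_norm (ftas_emp sel pic dflt X U \<omega> t - \<theta>) \<le> \<epsilon>)}"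
      have sec0: "0 \<le> 2 * B * real CARD('k) * real T * E T"
        using Bpos Epos[of T] by (intro mult_nonneg_nonneg) auto
      have "P \<le> 1 / real T powr \<alpha> + 2 * B * real CARD('k) * real T * E T"
      proof (cases "T0 \<le> T")
        case True
        have "P \<le> Kc * (real (nat \<lfloor>real T powr (1/16)\<rfloor>) * (1 - p0 / (2 * (real (nat \<lfloor>real T powr (1/16)\<rfloor>) + 1)^2)) ^ ((nat \<lfloor>real T powr (1/16)\<rfloor>)^3)
           + real T * ((fact (2*k) / (2^k * fact k)) / (real (nat \<lfloor>real T powr (1/16)\<rfloor>) * \<epsilon>\<^sup>2)^k))"
          unfolding P_def Kc_def by (rule fixedT_bound[OF env ws sel fs e T])
        also have "\<dots> \<le> 1 / real T powr \<alpha>" by (rule T0[OF True T])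
        finally show ?thesis using sec0 by linarith
      next
        case False
        then have Tin: "T \<in> {1..<T0}" using T by simp
        have "1 / (2 * Kc * real T * E T) \<le> (\<Sum>T\<in>{1..<T0}. 1 / (2 * Kc * real T * E T))"
          by (rule member_le_sum[OF Tin]) (use Kc Epos in \<open>auto intro!: divide_nonneg_nonneg mult_nonneg_nonneg less_imp_le\<close>)
        then have hB: "1 / (2 * Kc * real T * E T) \<le> B" by (simp add: B_def)
        have pos: "0 < 2 * Kc * real T * E T" using Kc Epos[of T] T by simp
        have "1 \<le> B * (2 * Kc * real T * E T)" using hB pos by (simp add: divide_le_eq mult.commute)
        then have "1 \<le> 2 * B * real CARD('k) * real T * E T" by (simp add: Kc_def mult_ac)
        moreover have "P \<le> 1" unfolding P_def using pr1[OF env] .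
        ultimately show ?thesis using pw0[of T] by linarith
      qed
      then show "measure M {\<omega> \<in> space M. \<not> (\<forall>t\<in>{nat \<lceil>real T powr (1/4)\<rceil>..T}.
                     sup_norm (ftas_emp sel pic dflt X U \<omega> t - \<theta>) \<le> \<epsilon>)}
                 \<le> 1 / real T powr \<alpha> + 2 * B * real CARD('k) * real T * exp (- 2 * real_of_int \<lfloor>p0 powr (1/4) * real T powr (1/16)
                                  / sqrt (ln (1 + real K' * real T powr \<alpha>))\<rfloor> * \<epsilon>\<^sup>2)"
        unfolding P_def E_def .
    qed
  qed
qed

end
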